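(* Suppose that $T$ is irreducible with Perron–Frobenius eigenvalue $\lambda_0>1$. There exist a constant $C>0$ and an integer $K$, depending only on $T$, such that for every $k\ge K$ and every pair of admissible $(k+1)$-words $w_1,w_2$, the Perron–Frobenius eigenvalue $\lambda_1$ of $T_k\langle\{w_1,w_2\}\rangle$ satisfies $|\lambda_1-\lambda_0|\le C\lambda_0^{-k/2}$.
   Context: Let $\mathcal{A}$ be a finite alphabet of $r$ symbols and $T=(T_{x,y})$ an $r\times r$ matrix with entries in $\{0,1\}$; $T$ is irreducible if the directed graph on $\mathcal{A}$ with an edge $x\to y$ iff $T_{y,x}=1$ is strongly connected, and its Perron–Frobenius eigenvalue $\lambda_0$ is its spectral radius (a positive eigenvalue). An admissible $k$-word is a string $a_1\cdots a_k$ of symbols with $T_{a_{i+1},a_i}=1$ for $1\le i\le k-1$. $V_k$ is the complex vector space with basis $\{[w]\}$ indexed by admissible $k$-words, and $T_k:V_k\to V_k$ is linear with $T_k([a_1\cdots a_k])=\sum[a_2\cdots a_kx]$, summed over symbols $x$ with $a_2\cdots a_kx$ admissible. For a word $w$, $\beta w$, $\eta w$ are obtained by deleting the last, resp. first, symbol. For an admissible $(k+1)$-word $w$, $E_w:V_k\to V_k$ is linear with $E_w[\beta w]=[\eta w]$ and $E_w[u]=0$ for all other admissible $k$-words $u$. For a set $\mathcal{C}$ of admissible $(k+1)$-words, $T_k\langle\mathcal{C}\rangle=T_k-\sum_{w\in\mathcal{C}}E_w$; its matrix in the word basis is a non-negative $0/1$ matrix (that of $T_k$ with the $(\eta w,\beta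 w)$ entries set to $0$), i.e. the adjacency matrix of the shift obtained by forbidding the words of $\mathcal{C}$, and its Perron–Frobenius eigenvalue is its spectral radius, which is an eigenvalue. *)

theory Defs
  imports Complex_Main
begin

definition irreducible01 :: "nat \<Rightarrow> (nat \<Rightarrow> nat \<Rightarrow> real) \<Rightarrow> bool" where
  "irreducible01 r T \<longleftrightarrow>
     (\<forall>x<r. \<forall>y<r. (x, y) \<in> {(a, b). a < r \<and> b < r \<and> T b a = 1}\<^sup>*)"

definition admissible :: "nat \<Rightarrow> (nat \<Rightarrow> nat \<Rightarrow> real) \<Rightarrow> nat \<Rightarrow> nat list \<Rightarrow> bool" where
  "admissible r T k w \<longleftrightarrow> length w = k \<and> set w \<subseteq> {..<r} \<and>
     (\<forall>i. Suc i < k \<longrightarrow> T (w ! Suc i) (w ! i) = 1)"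

definition adm_words :: "nat \<Rightarrow> (nat \<Rightarrow> nat \<Rightarrow> real) \<Rightarrow> nat \<Rightarrow> nat list set" where
  "adm_words r T k = {w. admissible r T k w}"

text \<open>Matrix of T_k in the word basis: entry (u, v) is the coefficient of [u] in T_k [v],
  i.e. 1 iff u = a_2...a_k x where v = a_1...a_k.\<close>
definition Tk_mat :: "nat \<Rightarrow> (nat \<Rightarrow> nat \<Rightarrow> real) \<Rightarrow> nat \<Rightarrow> nat list \<Rightarrow> nat list \<Rightarrow> real" where
  "Tk_mat r T k u v =
     (if admissible r T k u \<and> admissible r T k v \<and> (\<exists>x. u = tl v @ [x]) then 1 else 0)"

text \<open>Matrix of E_w (w an admissible (k+1)-word): maps [beta w] to [eta w], where
  beta deletes the last symbol (butlast) and eta deletes the first (tl).\<close>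
definition E_mat :: "nat list \<Rightarrow> nat list \<Rightarrow> nat list \<Rightarrow> real" where
  "E_mat w u v = (if u = tl w \<and> v = butlast w then 1 else 0)"

definition Tk_forbid :: "nat \<Rightarrow> (nat \<Rightarrow> nat \<Rightarrow> real) \<Rightarrow> nat \<Rightarrow> nat list set
    \<Rightarrow> nat list \<Rightarrow> nat list \<Rightarrow> real" where
  "Tk_forbid r T k C u v = Tk_mat r T k u v - (\<Sum>w\<in>C. E_mat w u v)"

definition is_eigenvalue :: "'i set \<Rightarrow> ('i \<Rightarrow> 'i \<Rightarrow> real) \<Rightarrow> complex \<Rightarrow> bool" where
  "is_eigenvalue S M \<mu> \<longleftrightarrow> (\<exists>f :: 'i \<Rightarrow> complex. (\<exists>s\<in>S. f s \<noteq> 0) \<and>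
      (\<forall>u\<in>S. (\<Sum>v\<in>S. complex_of_real (M u v) * f v) = \<mu> * f u))"

definition spec_radius :: "'i set \<Rightarrow> ('i \<Rightarrow> 'i \<Rightarrow> real) \<Rightarrow> real" where
  "spec_radius S M = Max (cmod ` {\<mu>. is_eigenvalue S M \<mu>})"

abbreviation pf_eigenvalue :: "'i set \<Rightarrow> ('i \<Rightarrow> 'i \<Rightarrow> real) \<Rightarrow> real" where
  "pf_eigenvalue S M \<equiv> spec_radius S M"

end

theory Submission
  imports Defs "Jordan_Normal_Form.Spectral_Radius"
begin

definition opC :: "'i set \<Rightarrow> ('i \<Rightarrow> 'i \<Rightarrow> real) \<Rightarrow> ('i \<Rightarrow> complex) \<Rightarrow> 'i \<Rightarrow> complex" where
  "opC S M f u = (\<Sum>v\<in>S. complex_of_real (M u v) * f v)"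

definition matc :: "'i set \<Rightarrow> ('i \<Rightarrow> 'i \<Rightarrow> real) \<Rightarrow> (nat \<Rightarrow> 'i) \<Rightarrow> nat \<Rightarrow> complex mat" where
  "matc S M e n = mat n n (\<lambda>(i,j). complex_of_real (M (e i) (e j)))"

lemma matc_carrier: "matc S M e n \<in> carrier_mat n n"
  unfolding matc_def by simp

lemma matc_mult:
  assumes e: "bij_betw e {..<n} S"
  shows "matc S M e n *\<^sub>v vec n (\<lambda>i. f (e i)) = vec n (\<lambda>i. opC S M f (e i))"
proof (rule eq_vecI)
  fix i assume "i < dim_vec (vec n (\<lambda>i. opC S M f (e i)))"
  hence i: "i < n" by simp
  have "(matc S M e n *\<^sub>v vec n (\<lambda>i. f (e i))) $ i
      = (\<Sum>j\<in>{0..<n}. complex_of_real (M (e i) (e j)) * f (e j))"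
    using i unfolding matc_def by (simp add: scalar_prod_def row_def)
  also have "\<dots> = (\<Sum>j\<in>{..<n}. complex_of_real (M (e i) (e j)) * f (e j))"
    by (simp add: atLeast0LessThan)
  also have "\<dots> = opC S M f (e i)"
    unfolding opC_def using sum.reindex_bij_betw[OF e, of "\<lambda>v. complex_of_real (M (e i) v) * f v"] by simp
  finally show "(matc S M e n *\<^sub>v vec n (\<lambda>i. f (e i))) $ i = vec n (\<lambda>i. opC S M f (e i)) $ i"
    using i by simp
qed (simp add: matc_def)

lemma matc_pow:
  assumes e: "bij_betw e {..<n} S"
  shows "(matc S M e n ^\<^sub>m k) *\<^sub>v vec n (\<lambda>i. f (e i)) = vec n (\<lambda>i. ((opC S M ^^ k) f) (e i))"
proof (induction k arbitrary: f)
  case 0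
  have "vec n (\<lambda>i. f (e i)) \<in> carrier_vec n" by simp
  then show ?case by (simp add: matc_def)
next
  case (Suc k)
  have c: "matc S M e n \<in> carrier_mat n n" by (rule matc_carrier)
  have "(matc S M e n ^\<^sub>m Suc k) *\<^sub>v vec n (\<lambda>i. f (e i))
     = (matc S M e n ^\<^sub>m k) *\<^sub>v (matc S M e n *\<^sub>v vec n (\<lambda>i. f (e i)))"
    using c by (simp add: assoc_mult_mat_vec[of _ n n _ n])
  also have "\<dots> = (matc S M e n ^\<^sub>m k) *\<^sub>v vec n (\<lambda>i. opC S M f (e i))"
    using matc_mult[OF e] by simp
  also have "\<dots> = vec n (\<lambda>i. ((opC S M ^^ k) (opC S M f)) (e i))"
    by (rule Suc.IH)
  finally show ?case by (simp only: funpow_Suc_right comp_apply)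
qed

lemma is_eigenvalue_matc:
  assumes e: "bij_betw e {..<n} S"
  shows "is_eigenvalue S M \<mu> \<longleftrightarrow> eigenvalue (matc S M e n) \<mu>"
proof
  assume "is_eigenvalue S M \<mu>"
  then obtain f where f0: "\<exists>s\<in>S. f s \<noteq> 0" and fe: "\<forall>u\<in>S. opC S M f u = \<mu> * f u"
    unfolding is_eigenvalue_def opC_def by blast
  define v where "v = vec n (\<lambda>i. f (e i))"
  have "v \<noteq> 0\<^sub>v n"
  proof
    assume "v = 0\<^sub>v n"
    from f0 obtain s where s: "s \<in> S" "f s \<noteq> 0" by blast
    then obtain i where i: "i < n" "e i = s" using e by (auto simp: bij_betw_def)
    have "v $ i = 0" using \<open>v = 0\<^sub>v n\<close> i by simp
    thus False using i s unfolding v_def by simp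
  qed
  moreover have "matc S M e n *\<^sub>v v = \<mu> \<cdot>\<^sub>v v"
    unfolding v_def matc_mult[OF e]
    by (rule eq_vecI) (use fe e in \<open>auto simp: bij_betw_def\<close>)
  ultimately show "eigenvalue (matc S M e n) \<mu>"
    unfolding eigenvalue_def eigenvector_def
    by (intro exI[of _ v]) (simp add: matc_def v_def)
next
  assume "eigenvalue (matc S M e n) \<mu>"
  then obtain v where v: "v \<in> carrier_vec n" "v \<noteq> 0\<^sub>v n" "matc S M e n *\<^sub>v v = \<mu> \<cdot>\<^sub>v v"
    unfolding eigenvalue_def eigenvector_def matc_def by auto
  define f where "f u = v $ (inv_into {..<n} e u)" for u
  have fe: "f (e i) = v $ i" if "i < n" for i
    unfolding f_def using e that by (simp add: bij_betw_def)
  have vf: "v = vec n (\<lambda>i. f (e i))"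
    using v(1) fe by auto
  have "\<exists>s\<in>S. f s \<noteq> 0"
  proof (rule ccontr)
    assume "\<not> ?thesis"
    hence "v = 0\<^sub>v n" using v(1) fe e by (intro eq_vecI) (auto simp: bij_betw_def)
    with v(2) show False by simp
  qed
  moreover have "\<forall>u\<in>S. opC S M f u = \<mu> * f u"
  proof
    fix u assume "u \<in> S"
    then obtain i where i: "i < n" "u = e i" using e by (auto simp: bij_betw_def)
    have "vec n (\<lambda>i. opC S M f (e i)) $ i = (\<mu> \<cdot>\<^sub>v v) $ i"
      using v(3) matc_mult[OF e, of M f] vf by simp
    thus "opC S M f u = \<mu> * f u" using i v(1) fe by simp
  qed
  ultimately show "is_eigenvalue S M \<mu>" unfolding is_eigenvalue_def opC_def by blast
qed

lemma eig_finite: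
  assumes "finite S"
  shows "finite {\<mu>. is_eigenvalue S M \<mu>}"
proof -
  obtain e where e: "bij_betw e {..<card S} S"
    using ex_bij_betw_nat_finite[OF assms] by (auto simp: atLeast0LessThan)
  have "{\<mu>. is_eigenvalue S M \<mu>} = spectrum (matc S M e (card S))"
    unfolding spectrum_def using is_eigenvalue_matc[OF e] by auto
  thus ?thesis using card_finite_spectrum(1)[OF matc_carrier] by simp
qed

lemma eig_nonempty:
  assumes "finite S" "S \<noteq> {}"
  shows "\<exists>\<mu>. is_eigenvalue S M \<mu>"
proof -
  obtain e where e: "bij_betw e {..<card S} S"
    using ex_bij_betw_nat_finite[OF assms(1)] by (auto simp: atLeast0LessThan)
  have "{\<mu>. is_eigenvalue S M \<mu>} = spectrum (matc S M e (card S))"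
    unfolding spectrum_def using is_eigenvalue_matc[OF e] by auto
  moreover have "card S > 0" using assms by auto
  ultimately have "spectrum (matc S M e (card S)) \<noteq> {}" using spectrum_non_empty[OF matc_carrier] by blast
  thus ?thesis using \<open>{\<mu>. is_eigenvalue S M \<mu>} = _\<close> by auto
qed

definition opR :: "'i set \<Rightarrow> ('i \<Rightarrow> 'i \<Rightarrow> real) \<Rightarrow> ('i \<Rightarrow> real) \<Rightarrow> 'i \<Rightarrow> real" where
  "opR S M f u = (\<Sum>v\<in>S. M u v * f v)"

lemma opC_ofreal1: "opC S M (\<lambda>v. complex_of_real (h v)) = (\<lambda>v. complex_of_real (opR S M h v))"
  by (simp add: opC_def opR_def fun_eq_iff)

lemma opC_ofreal: "(opC S M ^^ k) (\<lambda>v. complex_of_real (g v)) = (\<lambda>v. complex_of_real ((opR S M ^^ k) g v))"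
proof (induction k)
  case 0 then show ?case by simp
next
  case (Suc k)
  show ?case by (simp only: funpow.simps comp_apply Suc opC_ofreal1)
qed

lemma opR_mono:
  assumes "\<forall>u\<in>S. \<forall>v\<in>S. M u v \<ge> 0" "\<forall>v\<in>S. f v \<le> g v" "u \<in> S"
  shows "opR S M f u \<le> opR S M g u"
  unfolding opR_def using assms by (intro sum_mono mult_left_mono) auto

lemma opR_scale: "opR S M (\<lambda>v. c * f v) u = c * opR S M f u"
  unfolding opR_def by (simp add: sum_distrib_left algebra_simps)

lemma opR_iter_ge:
  assumes M: "\<forall>u\<in>S. \<forall>v\<in>S. M u v \<ge> 0" and p: "\<forall>u\<in>S. opR S M p u \<ge> a * p u"
    and a: "a \<ge> 0"
  shows "\<forall>u\<in>S. (opR S M ^^ k) p u \<ge> a ^ k * p u"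
proof (induction k)
  case 0 then show ?case by simp
next
  case (Suc k)
  show ?case
  proof
    fix u assume u: "u \<in> S"
    have "a ^ Suc k * p u = a ^ k * (a * p u)" by (simp add: algebra_simps)
    also have "\<dots> \<le> a ^ k * opR S M p u" using p u a by (intro mult_left_mono) auto
    also have "\<dots> = opR S M (\<lambda>v. a ^ k * p v) u" by (rule opR_scale[symmetric])
    also have "\<dots> \<le> opR S M ((opR S M ^^ k) p) u"
      by (rule opR_mono[OF M _ u]) (use Suc in auto)
    also have "\<dots> = (opR S M ^^ Suc k) p u" by simp
    finally show "(opR S M ^^ Suc k) p u \<ge> a ^ Suc k * p u" .
  qed
qed

lemma mat_vec_norm_bound:
  assumes A: "A \<in> carrier_mat n n" and nb: "norm_bound A c" and i: "i < n" and w: "w \<in> carrier_vec n"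
  shows "norm ((A *\<^sub>v w) $ i) \<le> c * (\<Sum>j<n. norm (w $ j))"
proof -
  have "(A *\<^sub>v w) $ i = (\<Sum>j\<in>{0..<n}. A $$ (i, j) * w $ j)"
    using A i w by (simp add: scalar_prod_def row_def)
  also have "norm \<dots> \<le> (\<Sum>j\<in>{0..<n}. norm (A $$ (i, j) * w $ j))" by (rule norm_sum)
  also have "\<dots> \<le> (\<Sum>j\<in>{0..<n}. c * norm (w $ j))"
    using nb A i unfolding norm_bound_def
    by (intro sum_mono) (auto simp: norm_mult intro: mult_right_mono)
  finally show ?thesis by (simp add: sum_distrib_left atLeast0LessThan)
qed

lemma cw_lemma:
  assumes S: "finite S" and M: "\<forall>u\<in>S. \<forall>v\<in>S. M u v \<ge> 0" and mu: "\<mu> > 0"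
    and s: "s \<in> S" "z s > 0"
    and z: "\<forall>u\<in>S. z u > 0 \<longrightarrow> opR S M z u \<ge> \<mu> * z u"
  shows "\<exists>\<nu>. is_eigenvalue S M \<nu> \<and> cmod \<nu> \<ge> \<mu>"
proof (rule ccontr)
  assume neg: "\<not> ?thesis"
  hence lt: "\<And>\<nu>. is_eigenvalue S M \<nu> \<Longrightarrow> cmod \<nu> < \<mu>" by force
  define E where "E = cmod ` {\<nu>. is_eigenvalue S M \<nu>}"
  have Ef: "finite E" unfolding E_def using eig_finite[OF S] by simp
  have Ene: "E \<noteq> {}" unfolding E_def using eig_nonempty[OF S] s by auto
  define m where "m = max (Max E) 0"
  have mlt: "m < \<mu>" unfolding m_def using Ef Ene lt mu by (auto simp: E_def)
  have mge: "\<And>\<nu>. is_eigenvalue S M \<nu> \<Longrightarrow> cmod \<nu> \<le> m"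
    unfolding m_def using Ef by (auto simp: E_def intro!: Max_ge max.coboundedI1)
  define \<mu>' where "\<mu>' = (m + \<mu>) / 2"
  have m0: "m \<ge> 0" unfolding m_def by simp
  have mu'pos: "\<mu>' > 0" and mu'lt: "\<mu>' < \<mu>" and mmu': "m < \<mu>'" using m0 mlt mu by (auto simp: \<mu>'_def)
  define N where "N u v = M u v / \<mu>'" for u v
  have N: "\<forall>u\<in>S. \<forall>v\<in>S. N u v \<ge> 0" using M mu'pos by (auto simp: N_def)
  define p where "p u = max (z u) 0" for u
  have p: "\<forall>u\<in>S. opR S N p u \<ge> (\<mu> / \<mu>') * p u"
  proof
    fix u assume u: "u \<in> S"
    have opN: "opR S N f u = opR S M f u / \<mu>'" for f
      unfolding opR_def N_def by (simp add: sum_divide_distrib)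
    show "opR S N p u \<ge> (\<mu> / \<mu>') * p u"
    proof (cases "z u > 0")
      case True
      have "opR S M z u \<le> opR S M p u" by (rule opR_mono[OF M _ u]) (auto simp: p_def)
      hence "\<mu> * z u \<le> opR S M p u" using z u True by force
      thus ?thesis using True mu'pos by (simp add: opN p_def field_simps)
    next
      case False
      have "opR S N (\<lambda>v. 0) u \<le> opR S N p u" by (rule opR_mono[OF N _ u]) (auto simp: p_def)
      then show ?thesis using False by (simp add: p_def opR_def)
    qed
  qed
  have iter: "\<forall>u\<in>S. (opR S N ^^ k) p u \<ge> (\<mu> / \<mu>') ^ k * p u" for k
    by (rule opR_iter_ge[OF N p]) (use mu mu'pos in auto)
  obtain e where e: "bij_betw e {..<card S} S"
    using ex_bij_betw_nat_finite[OF S] by (auto simp: atLeast0LessThan)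
  define n where "n = card S"
  define B where "B = matc S N e n"
  have Bc: "B \<in> carrier_mat n n" unfolding B_def by (rule matc_carrier)
  have "n > 0" using S s by (auto simp: n_def card_gt_0_iff)
  have specB: "\<And>\<nu>. \<nu> \<in> spectrum B \<Longrightarrow> norm \<nu> < 1"
  proof -
    fix \<nu> assume "\<nu> \<in> spectrum B"
    hence "is_eigenvalue S N \<nu>" unfolding spectrum_def B_def n_def using is_eigenvalue_matc[OF e] by auto
    then obtain f where f0: "\<exists>s\<in>S. f s \<noteq> 0" and fe: "\<forall>u\<in>S. (\<Sum>v\<in>S. complex_of_real (N u v) * f v) = \<nu> * f u"
      unfolding is_eigenvalue_def by blast
    have "\<forall>u\<in>S. (\<Sum>v\<in>S. complex_of_real (M u v) * f v) = (complex_of_real \<mu>' * \<nu>) * f u"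
    proof
      fix u assume u: "u \<in> S"
      have "(\<Sum>v\<in>S. complex_of_real (M u v) * f v) = complex_of_real \<mu>' * (\<Sum>v\<in>S. complex_of_real (N u v) * f v)"
        unfolding sum_distrib_left N_def using mu'pos by (intro sum.cong) (auto simp: field_simps)
      thus "(\<Sum>v\<in>S. complex_of_real (M u v) * f v) = (complex_of_real \<mu>' * \<nu>) * f u" using fe u by simp
    qed
    hence "is_eigenvalue S M (complex_of_real \<mu>' * \<nu>)" unfolding is_eigenvalue_def using f0 by blast
    hence "cmod (complex_of_real \<mu>' * \<nu>) \<le> m" by (rule mge)
    hence "\<mu>' * cmod \<nu> \<le> m" using mu'pos by (simp add: norm_mult)
    hence "\<mu>' * cmod \<nu> < \<mu>' * 1" using mmu' by simp
    thus "norm \<nu> < 1" using mu'pos by (simp only: mult_less_cancel_left_pos)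
  qed
  have "spectral_radius B < 1"
  proof -
    have fin: "finite (spectrum B)" by (rule card_finite_spectrum(1)[OF Bc])
    have ne: "spectrum B \<noteq> {}" by (rule spectrum_non_empty[OF Bc \<open>n > 0\<close>])
    show ?thesis unfolding spectral_radius_def using fin ne specB by (auto simp: Max_less_iff)
  qed
  then obtain c where c: "\<And>k. norm_bound (B ^\<^sub>m k) c"
    using spectral_radius_jnf_norm_bound_less_1_upper_triangular[OF Bc] by blast
  define P where "P = (\<Sum>j<n. norm (complex_of_real (p (e j))))"
  have "s \<in> e ` {..<n}" using e s by (simp add: bij_betw_def n_def)
  then obtain i where i: "i < n" "e i = s" by auto
  have bound: "(\<mu> / \<mu>') ^ k * p s \<le> c * P" for k
  proof -
    have "(B ^\<^sub>m k) *\<^sub>v vec n (\<lambda>j. complex_of_real (p (e j))) = vec n (\<lambda>j. ((opC S N ^^ k) (\<lambda>v. complex_of_real (p v))) (e j))"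
      unfolding B_def n_def by (rule matc_pow[OF e])
    hence eq: "((B ^\<^sub>m k) *\<^sub>v vec n (\<lambda>j. complex_of_real (p (e j)))) $ i = complex_of_real ((opR S N ^^ k) p s)"
      using i by (simp add: opC_ofreal)
    have "norm (((B ^\<^sub>m k) *\<^sub>v vec n (\<lambda>j. complex_of_real (p (e j)))) $ i) \<le> c * P"
      unfolding P_def using mat_vec_norm_bound[OF pow_carrier_mat[OF Bc] c i(1), of "vec n (\<lambda>j. complex_of_real (p (e j)))"] by simp
    hence "\<bar>(opR S N ^^ k) p s\<bar> \<le> c * P" using eq by simp
    moreover have "(opR S N ^^ k) p s \<ge> (\<mu> / \<mu>') ^ k * p s" using iter s by blast
    ultimately show ?thesis by linarith
  qed
  have ps: "p s > 0" using s by (simp add: p_def)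
  have "1 < \<mu> / \<mu>'" using mu'lt mu'pos by simp
  then obtain k where "c * P / p s < (\<mu> / \<mu>') ^ k" using real_arch_pow by blast
  hence "c * P < (\<mu> / \<mu>') ^ k * p s" using ps by (simp add: field_simps)
  with bound[of k] show False by simp
qed



lemma sr_ge:
  assumes "finite S" "is_eigenvalue S M \<nu>"
  shows "cmod \<nu> \<le> spec_radius S M"
  unfolding spec_radius_def using eig_finite[OF assms(1)] assms(2) by (auto intro!: Max_ge)

lemma sr_attained:
  assumes "finite S" "S \<noteq> {}"
  shows "\<exists>\<nu>. is_eigenvalue S M \<nu> \<and> cmod \<nu> = spec_radius S M"
proof -
  have f: "finite (cmod ` {\<nu>. is_eigenvalue S M \<nu>})" using eig_finite[OF assms(1)] by simp
  have ne: "cmod ` {\<nu>. is_eigenvalue S M \<nu>} \<noteq> {}" using eig_nonempty[OF assms] by auto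
  show ?thesis using Max_in[OF f ne] unfolding spec_radius_def by auto
qed

lemma sr_le:
  assumes "finite S" "S \<noteq> {}" "\<And>\<nu>. is_eigenvalue S M \<nu> \<Longrightarrow> cmod \<nu> \<le> b"
  shows "spec_radius S M \<le> b"
  using sr_attained[OF assms(1,2), of M] assms(3) by force

lemma sr_cw:
  assumes S: "finite S" and M: "\<forall>u\<in>S. \<forall>v\<in>S. M u v \<ge> 0" and mu: "\<mu> > 0"
    and s: "s \<in> S" "z s > 0"
    and z: "\<forall>u\<in>S. z u > 0 \<longrightarrow> opR S M z u \<ge> \<mu> * z u"
  shows "spec_radius S M \<ge> \<mu>"
  using cw_lemma[OF assms] sr_ge[OF S] by force

lemma finite_argmax:
  fixes q :: "'a \<Rightarrow> real"
  assumes "finite S" "S \<noteq> {}"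
  shows "\<exists>u\<in>S. \<forall>v\<in>S. q v \<le> q u"
proof -
  have "Max (q ` S) \<in> q ` S" using assms by (intro Max_in) auto
  then obtain u where "u \<in> S" "q u = Max (q ` S)" by auto
  thus ?thesis using assms by (metis Max_ge finite_imageI imageI)
qed

lemma finite_argmin:
  fixes q :: "'a \<Rightarrow> real"
  assumes "finite S" "S \<noteq> {}"
  shows "\<exists>u\<in>S. \<forall>v\<in>S. q u \<le> q v"
  using finite_argmax[OF assms, of "\<lambda>v. - q v"] by auto

lemma eig_upper:
  assumes S: "finite S" and X: "\<forall>u\<in>S. X u > 0" and Xe: "\<forall>u\<in>S. opR S Mb X u = lam * X u"
    and M: "\<forall>u\<in>S. \<forall>v\<in>S. 0 \<le> M u v \<and> M u v \<le> Mb u v"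
    and ev: "is_eigenvalue S M \<nu>"
  shows "cmod \<nu> \<le> lam"
proof -
  obtain f where f0: "\<exists>s\<in>S. f s \<noteq> 0" and fe: "\<forall>u\<in>S. (\<Sum>v\<in>S. complex_of_real (M u v) * f v) = \<nu> * f u"
    using ev unfolding is_eigenvalue_def by blast
  define q where "q v = cmod (f v) / X v" for v
  have Sne: "S \<noteq> {}" using f0 by auto
  obtain u where u: "u \<in> S" "\<forall>v\<in>S. q v \<le> q u"
    using finite_argmax[OF S Sne] by blast
  obtain s where s: "s \<in> S" "f s \<noteq> 0" using f0 by blast
  have "q s > 0" using s X unfolding q_def by auto
  hence qu: "q u > 0" using u s by force
  have fu: "cmod (f u) = q u * X u" using X u unfolding q_def by auto
  have fv: "cmod (f v) \<le> q u * X v" if "v \<in> S" for v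
    using u that X unfolding q_def by (auto simp: divide_le_eq)
  have "cmod \<nu> * cmod (f u) = cmod (\<Sum>v\<in>S. complex_of_real (M u v) * f v)"
    using fe u by (simp add: norm_mult)
  also have "\<dots> \<le> (\<Sum>v\<in>S. cmod (complex_of_real (M u v) * f v))" by (rule norm_sum)
  also have "\<dots> \<le> (\<Sum>v\<in>S. Mb u v * (q u * X v))"
  proof (rule sum_mono)
    fix v assume v: "v \<in> S"
    have "cmod (complex_of_real (M u v) * f v) = M u v * cmod (f v)" using M u v by (simp add: norm_mult)
    also have "\<dots> \<le> Mb u v * (q u * X v)" using M u v fv[OF v] X
      by (intro mult_mono) (auto intro: order_trans)
    finally show "cmod (complex_of_real (M u v) * f v) \<le> Mb u v * (q u * X v)" .
  qed
  also have "\<dots> = q u * opR S Mb X u" unfolding opR_def by (simp add: sum_distrib_left algebra_simps)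
  also have "\<dots> = lam * cmod (f u)" using Xe u fu by simp
  finally have "cmod \<nu> * cmod (f u) \<le> lam * cmod (f u)" .
  moreover have "cmod (f u) > 0" using fu qu X u by simp
  ultimately show ?thesis by simp
qed



lemma opR_iter_nonneg:
  assumes M: "\<forall>u\<in>S. \<forall>v\<in>S. M u v \<ge> 0" and d: "\<forall>u\<in>S. d u \<ge> 0"
  shows "\<forall>u\<in>S. (opR S M ^^ n) d u \<ge> 0"
proof (induction n)
  case 0 then show ?case using d by simp
next
  case (Suc n)
  show ?case
  proof
    fix u assume u: "u \<in> S"
    have "opR S M (\<lambda>v. 0) u \<le> opR S M ((opR S M ^^ n) d) u"
      by (rule opR_mono[OF M _ u]) (use Suc in auto)
    thus "(opR S M ^^ Suc n) d u \<ge> 0" by (simp add: opR_def)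
  qed
qed

lemma opR_diff: "opR S M (\<lambda>v. f v - c * g v) u = opR S M f u - c * opR S M g u"
  unfolding opR_def by (simp add: algebra_simps sum_subtractf sum_distrib_left)

lemma opR_iter_diff: "(opR S M ^^ m) (\<lambda>v. f v - c * g v) = (\<lambda>u. (opR S M ^^ m) f u - c * (opR S M ^^ m) g u)"
proof (induction m)
  case 0 then show ?case by simp
next
  case (Suc m)
  show ?case by (simp only: funpow.simps comp_apply Suc) (simp add: opR_diff)
qed

lemma opR_sum: "opR S M (\<lambda>v. \<Sum>m\<in>I. F m v) u = (\<Sum>m\<in>I. opR S M (F m) u)"
  unfolding opR_def by (simp add: sum_distrib_left sum.swap[of _ S])

lemma path_pos:
  assumes S: "finite S" and M: "\<forall>u\<in>S. \<forall>v\<in>S. M u v \<ge> 0" and d: "\<forall>u\<in>S. d u \<ge> 0" and j: "d j > 0" "j \<in> S"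
    and R: "R \<subseteq> {(a,b). a \<in> S \<and> b \<in> S \<and> M b a > 0}"
  shows "(j, i) \<in> R ^^ n \<Longrightarrow> (opR S M ^^ n) d i > 0"
proof (induction n arbitrary: i)
  case 0 then show ?case using j by simp
next
  case (Suc n)
  then obtain i' where i': "(j, i') \<in> R ^^ n" "(i', i) \<in> R" by auto
  have pos: "(opR S M ^^ n) d i' > 0" using Suc.IH[OF i'(1)] .
  have ii: "i' \<in> S" "i \<in> S" "M i i' > 0" using R i'(2) by auto
  have nn: "\<forall>u\<in>S. (opR S M ^^ n) d u \<ge> 0" by (rule opR_iter_nonneg[OF M d])
  have "M i i' * (opR S M ^^ n) d i' \<le> (\<Sum>v\<in>S. M i v * (opR S M ^^ n) d v)"
    by (rule member_le_sum[of i' S "\<lambda>v. M i v * (opR S M ^^ n) d v"])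
       (use ii nn M S in \<open>auto\<close>)
  moreover have "M i i' * (opR S M ^^ n) d i' > 0" using ii pos by simp
  moreover have "(opR S M ^^ Suc n) d i = (\<Sum>v\<in>S. M i v * (opR S M ^^ n) d v)"
    by (simp only: funpow.simps comp_apply opR_def)
  ultimately show ?case by linarith
qed

lemma pf_exists:
  fixes T :: "nat \<Rightarrow> nat \<Rightarrow> real"
  assumes r: "0 < r" and T01: "\<forall>x<r. \<forall>y<r. T x y = 0 \<or> T x y = 1"
    and irr: "\<forall>x<r. \<forall>y<r. (x, y) \<in> {(a, b). a < r \<and> b < r \<and> T b a = 1}\<^sup>*"
  shows "\<exists>x. (\<forall>i<r. x i > 0) \<and> (\<forall>i<r. opR {..<r} T x i = spec_radius {..<r} T * x i)"
proof -
  define S where "S = {..<r::nat}"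
  define R where "R = {(a, b). a < r \<and> b < r \<and> T b a = 1}"
  define \<rho> where "\<rho> = spec_radius S T"
  have S: "finite S" "S \<noteq> {}" using r by (auto simp: S_def)
  have M: "\<forall>u\<in>S. \<forall>v\<in>S. T u v \<ge> 0" using T01 unfolding S_def by force
  have RS: "R \<subseteq> {(a,b). a \<in> S \<and> b \<in> S \<and> T b a > 0}" unfolding R_def S_def by auto
  obtain \<nu> where nu: "is_eigenvalue S T \<nu>" "cmod \<nu> = \<rho>" using sr_attained[OF S] unfolding \<rho>_def by blast
  obtain f where f0: "\<exists>s\<in>S. f s \<noteq> 0" and fe: "\<forall>u\<in>S. (\<Sum>v\<in>S. complex_of_real (T u v) * f v) = \<nu> * f u"
    using nu(1) unfolding is_eigenvalue_def by blast
  define g where "g v = cmod (f v)" for v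
  obtain s where s: "s \<in> S" "g s > 0" using f0 unfolding g_def by auto
  have g0: "\<forall>u\<in>S. g u \<ge> 0" unfolding g_def by simp
  have gsub: "\<forall>u\<in>S. opR S T g u \<ge> \<rho> * g u"
  proof
    fix u assume u: "u \<in> S"
    have "\<rho> * g u = cmod (\<Sum>v\<in>S. complex_of_real (T u v) * f v)"
      using fe u nu(2) by (simp add: g_def norm_mult)
    also have "\<dots> \<le> (\<Sum>v\<in>S. cmod (complex_of_real (T u v) * f v))" by (rule norm_sum)
    also have "\<dots> = opR S T g u" unfolding opR_def g_def using M u by (intro sum.cong) (auto simp: norm_mult)
    finally show "opR S T g u \<ge> \<rho> * g u" .
  qed
  define d where "d u = opR S T g u - \<rho> * g u" for u
  have d0: "\<forall>u\<in>S. d u \<ge> 0" using gsub by (simp add: d_def)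
  have dz: "\<forall>u\<in>S. d u = 0"
  proof (rule ccontr)
    assume "\<not> ?thesis"
    then obtain j where j: "j \<in> S" "d j > 0" using d0 by force
    have exn: "\<exists>n. (j, i) \<in> R ^^ n" if "i \<in> S" for i
      using irr j that unfolding S_def R_def by (simp add: rtrancl_power)
    define nf where "nf i = (SOME n. (j, i) \<in> R ^^ n)" for i
    have nf: "(j, i) \<in> R ^^ nf i" if "i \<in> S" for i
      unfolding nf_def using someI_ex[OF exn[OF that]] .
    define N where "N = Suc (Max (nf ` S))"
    have nfN: "nf i < N" if "i \<in> S" for i using S that unfolding N_def by (simp add: le_imp_less_Suc)
    define h where "h u = (\<Sum>m<N. (opR S T ^^ m) g u)" for u
    have h0: "\<forall>u\<in>S. h u \<ge> 0" unfolding h_def using opR_iter_nonneg[OF M g0] by (auto intro: sum_nonneg)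
    have hs: "h s > 0"
    proof -
      have "(opR S T ^^ 0) g s \<le> h s" unfolding h_def using opR_iter_nonneg[OF M g0] s N_def
        by (intro member_le_sum) auto
      thus ?thesis using s by simp
    qed
    define D where "D u = opR S T h u - \<rho> * h u" for u
    have Deq: "D u = (\<Sum>m<N. (opR S T ^^ m) d u)" for u
    proof -
      have "opR S T h u = (\<Sum>m<N. opR S T ((opR S T ^^ m) g) u)" unfolding h_def by (rule opR_sum)
      also have "\<dots> = (\<Sum>m<N. (opR S T ^^ m) (opR S T g) u)" by (simp add: funpow_swap1)
      finally have "D u = (\<Sum>m<N. (opR S T ^^ m) (opR S T g) u - \<rho> * (opR S T ^^ m) g u)"
        unfolding D_def h_def by (simp add: sum_subtractf sum_distrib_left)
      also have "\<dots> = (\<Sum>m<N. (opR S T ^^ m) d u)"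
        unfolding d_def opR_iter_diff by simp
      finally show ?thesis .
    qed
    have Dpos: "\<forall>u\<in>S. D u > 0"
    proof
      fix u assume u: "u \<in> S"
      have "(opR S T ^^ nf u) d u > 0" by (rule path_pos[OF S(1) M d0 j(2) j(1) RS nf[OF u]])
      moreover have "(opR S T ^^ nf u) d u \<le> (\<Sum>m<N. (opR S T ^^ m) d u)"
        using opR_iter_nonneg[OF M d0] nfN[OF u] u by (intro member_le_sum) auto
      ultimately show "D u > 0" unfolding Deq by linarith
    qed
    obtain u0 where u0: "u0 \<in> S" "\<forall>v\<in>S. D u0 / (h u0 + 1) \<le> D v / (h v + 1)"
      using finite_argmin[OF S, of "\<lambda>v. D v / (h v + 1)"] by blast
    define \<epsilon> where "\<epsilon> = D u0 / (h u0 + 1)"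
    have eps: "\<epsilon> > 0" unfolding \<epsilon>_def using Dpos u0 h0 by auto
    have rho0: "\<rho> \<ge> 0" using nu(2) by auto
    have "spec_radius S T \<ge> \<rho> + \<epsilon>"
    proof (rule sr_cw[OF S(1) M _ s(1)])
      show "\<rho> + \<epsilon> > 0" using eps rho0 by simp
      show "h s > 0" by (rule hs)
      show "\<forall>u\<in>S. h u > 0 \<longrightarrow> opR S T h u \<ge> (\<rho> + \<epsilon>) * h u"
      proof (intro ballI impI)
        fix u assume u: "u \<in> S" "h u > 0"
        have "\<epsilon> \<le> D u / (h u + 1)" using u0 u unfolding \<epsilon>_def by blast
        hence "\<epsilon> * (h u + 1) \<le> D u" using u by (simp add: field_simps)
        moreover have "\<epsilon> * h u \<le> \<epsilon> * (h u + 1)" using eps by simp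
        ultimately have "\<epsilon> * h u \<le> D u" by linarith
        thus "opR S T h u \<ge> (\<rho> + \<epsilon>) * h u" unfolding D_def by (simp add: algebra_simps)
      qed
    qed
    thus False using eps unfolding \<rho>_def by simp
  qed
  have geig: "\<forall>u\<in>S. opR S T g u = \<rho> * g u" using dz by (simp add: d_def)
  have gpos: "\<forall>i\<in>S. g i > 0"
  proof (rule ccontr)
    assume "\<not> ?thesis"
    then obtain i where i: "i \<in> S" "g i = 0" using g0 by force
    define Z where "Z = {u \<in> S. g u = 0}"
    have closed: "a \<in> Z" if "(a, b) \<in> R" "b \<in> Z" for a b
    proof -
      have ab: "a \<in> S" "b \<in> S" "T b a = 1" using that unfolding R_def S_def Z_def by auto
      have "(\<Sum>v\<in>S. T b v * g v) = 0" using geig ab that(2) unfolding Z_def opR_def by auto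
      moreover have "\<forall>v\<in>S. T b v * g v \<ge> 0" using M g0 ab by auto
      moreover have "(sum (\<lambda>v. T b v * g v) S = 0) = (\<forall>x\<in>S. T b x * g x = 0)"
        by (rule sum_nonneg_eq_0_iff[OF S(1)]) (use M g0 ab in auto)
      ultimately have "\<forall>v\<in>S. T b v * g v = 0" by blast
      hence "T b a * g a = 0" using ab(1) by blast
      thus ?thesis using ab unfolding Z_def by simp
    qed
    have "(s, i) \<in> R\<^sup>*" using irr s(1) i(1) unfolding S_def R_def by blast
    hence "i \<in> Z \<longrightarrow> s \<in> Z"
    proof (induction rule: rtrancl_induct)
      case base then show ?case by simp
    next
      case (step y z) then show ?case using closed[of y z] by simp
    qed
    thus False using i s unfolding Z_def by simp
  qed
  show ?thesis
    by (rule exI[of _ g]) (use gpos geig in \<open>auto simp: S_def \<rho>_def\<close>)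
qed



lemma adm_Cons:
  "admissible r T (Suc k) (b # w) \<longleftrightarrow> b < r \<and> admissible r T k w \<and> (w \<noteq> [] \<longrightarrow> T (hd w) b = 1)"
proof
  assume a: "admissible r T (Suc k) (b # w)"
  hence l: "length w = k" and s: "b < r" "set w \<subseteq> {..<r}" unfolding admissible_def by auto
  have t: "\<And>i. Suc i < Suc k \<Longrightarrow> T ((b#w) ! Suc i) ((b#w) ! i) = 1" using a unfolding admissible_def by blast
  have "T (w ! Suc i) (w ! i) = 1" if "Suc i < k" for i using t[of "Suc i"] that by simp
  moreover have "T (hd w) b = 1" if "w \<noteq> []" using t[of 0] that l by (cases k) (auto simp: hd_conv_nth)
  ultimately show "b < r \<and> admissible r T k w \<and> (w \<noteq> [] \<longrightarrow> T (hd w) b = 1)"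
    using l s unfolding admissible_def by auto
next
  assume a: "b < r \<and> admissible r T k w \<and> (w \<noteq> [] \<longrightarrow> T (hd w) b = 1)"
  hence l: "length w = k" unfolding admissible_def by auto
  have "T ((b#w) ! Suc i) ((b#w) ! i) = 1" if "Suc i < Suc k" for i
  proof (cases i)
    case 0
    then show ?thesis using a that l by (cases w) auto
  next
    case (Suc j)
    then show ?thesis using a that unfolding admissible_def by auto
  qed
  then show "admissible r T (Suc k) (b # w)" using a l unfolding admissible_def by auto
qed

lemma adm_snoc:
  "admissible r T (Suc k) (w @ [c]) \<longleftrightarrow> c < r \<and> admissible r T k w \<and> (w \<noteq> [] \<longrightarrow> T c (last w) = 1)"
proof
  assume a: "admissible r T (Suc k) (w @ [c])"
  hence l: "length w = k" and s: "c < r" "set w \<subseteq> {..<r}" unfolding admissible_def by auto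
  have t: "\<And>i. Suc i < Suc k \<Longrightarrow> T ((w @ [c]) ! Suc i) ((w @ [c]) ! i) = 1" using a unfolding admissible_def by blast
  have "T (w ! Suc i) (w ! i) = 1" if "Suc i < k" for i using t[of i] that l by (simp add: nth_append)
  moreover have "T c (last w) = 1" if "w \<noteq> []"
  proof -
    have "T ((w @ [c]) ! Suc (k - 1)) ((w @ [c]) ! (k - 1)) = 1" using t[of "k - 1"] that l by (cases k) auto
    thus ?thesis using that l by (cases k) (auto simp: nth_append last_conv_nth)
  qed
  ultimately show "c < r \<and> admissible r T k w \<and> (w \<noteq> [] \<longrightarrow> T c (last w) = 1)"
    using l s unfolding admissible_def by auto
next
  assume a: "c < r \<and> admissible r T k w \<and> (w \<noteq> [] \<longrightarrow> T c (last w) = 1)"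
  hence l: "length w = k" unfolding admissible_def by auto
  have "T ((w @ [c]) ! Suc i) ((w @ [c]) ! i) = 1" if "Suc i < Suc k" for i
  proof (cases "Suc i < k")
    case True
    then show ?thesis using a l unfolding admissible_def by (auto simp: nth_append)
  next
    case False
    hence "i = k - 1" "k > 0" using that by auto
    then show ?thesis using a l by (auto simp: nth_append last_conv_nth)
  qed
  then show "admissible r T (Suc k) (w @ [c])" using a l unfolding admissible_def by auto
qed

lemma adm_take:
  assumes "admissible r T k w" "L \<le> k"
  shows "admissible r T L (take L w)"
  using assms unfolding admissible_def by (auto dest: in_set_takeD)

lemma adm_drop:
  assumes "admissible r T k w" "n \<le> k"
  shows "admissible r T (k - n) (drop n w)"
  using assms unfolding admissible_def by (auto dest: in_set_dropD simp: add.commute)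

lemma adm_finite: "finite (adm_words r T k)"
proof -
  have "adm_words r T k \<subseteq> {w. set w \<subseteq> {..<r} \<and> length w = k}"
    unfolding adm_words_def admissible_def by auto
  thus ?thesis using finite_lists_length_eq[of "{..<r}" k] by (auto intro: finite_subset)
qed

lemma pred_set:
  assumes k: "k \<ge> 2" and u: "u \<in> adm_words r T k"
  shows "{v \<in> adm_words r T k. \<exists>c. u = tl v @ [c]} = (\<lambda>b. b # butlast u) ` {b. b < r \<and> T (hd u) b = 1}"
proof -
  have ua: "admissible r T k u" using u by (simp add: adm_words_def)
  have lu: "length u = k" using ua by (simp add: admissible_def)
  have une: "u \<noteq> []" using lu k by auto
  have ubl: "u = butlast u @ [last u]" using une by simp
  have bune: "butlast u \<noteq> []" using lu k by (cases u) auto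
  have hdb: "hd (butlast u) = hd u" using bune ubl by (metis hd_append2)
  have ua': "admissible r T (Suc (k - 1)) (butlast u @ [last u])" using ua ubl k by simp
  hence bua: "admissible r T (k - 1) (butlast u)" by (simp only: adm_snoc)
  show ?thesis
  proof (intro equalityI subsetI)
    fix v assume "v \<in> {v \<in> adm_words r T k. \<exists>c. u = tl v @ [c]}"
    then obtain c where va: "admissible r T k v" and uc: "u = tl v @ [c]" by (auto simp: adm_words_def)
    have lv: "length v = k" using va by (simp add: admissible_def)
    have vne: "v \<noteq> []" using lv k by auto
    have vv: "v = hd v # tl v" using vne by simp
    have "admissible r T (Suc (k - 1)) (hd v # tl v)" using va vv k by simp
    hence h: "hd v < r" "tl v \<noteq> [] \<longrightarrow> T (hd (tl v)) (hd v) = 1" by (simp_all only: adm_Cons) blast+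
    have tlne: "tl v \<noteq> []" using lv k by (cases v) auto
    have "hd (tl v) = hd u" using uc tlne by simp
    moreover have "tl v = butlast u" using uc by simp
    ultimately show "v \<in> (\<lambda>b. b # butlast u) ` {b. b < r \<and> T (hd u) b = 1}"
      using h tlne vv by (intro image_eqI[of _ _ "hd v"]) auto
  next
    fix v assume "v \<in> (\<lambda>b. b # butlast u) ` {b. b < r \<and> T (hd u) b = 1}"
    then obtain b where b: "b < r" "T (hd u) b = 1" and v: "v = b # butlast u" by auto
    have "admissible r T (Suc (k - 1)) (b # butlast u)"
      by (simp only: adm_Cons) (use b bua bune hdb in auto)
    hence "admissible r T k v" using v k by simp
    moreover have "u = tl v @ [last u]" using v ubl by simp
    ultimately show "v \<in> {v \<in> adm_words r T k. \<exists>c. u = tl v @ [c]}" by (auto simp: adm_words_def)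
  qed
qed

lemma pred_sum:
  assumes k: "k \<ge> 2" and u: "u \<in> adm_words r T k"
  shows "(\<Sum>v\<in>adm_words r T k. Tk_mat r T k u v * F v) = (\<Sum>b\<in>{b. b < r \<and> T (hd u) b = 1}. F (b # butlast u))"
proof -
  have ua: "admissible r T k u" using u by (simp add: adm_words_def)
  have "(\<Sum>v\<in>adm_words r T k. Tk_mat r T k u v * F v) = (\<Sum>v\<in>adm_words r T k. if \<exists>c. u = tl v @ [c] then F v else 0)"
    using ua by (intro sum.cong) (auto simp: Tk_mat_def adm_words_def)
  also have "\<dots> = (\<Sum>v\<in>{v \<in> adm_words r T k. \<exists>c. u = tl v @ [c]}. F v)"
    by (rule sum.inter_filter[symmetric]) (rule adm_finite)
  also have "\<dots> = (\<Sum>v\<in>(\<lambda>b. b # butlast u) ` {b. b < r \<and> T (hd u) b = 1}. F v)"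
    by (simp only: pred_set[OF k u])
  also have "\<dots> = (\<Sum>b\<in>{b. b < r \<and> T (hd u) b = 1}. F (b # butlast u))"
    by (rule sum.reindex_cong[of "\<lambda>b. b # butlast u"]) (auto simp: inj_on_def)
  finally show ?thesis .
qed



lemma sum_le_one:
  assumes "finite B" "\<And>b. b \<in> B \<Longrightarrow> Q b \<Longrightarrow> b = c"
  shows "(\<Sum>b\<in>B. if Q b then (1::real) else 0) \<le> 1"
proof -
  have "(\<Sum>b\<in>B. if Q b then (1::real) else 0) = (\<Sum>b\<in>{b\<in>B. Q b}. 1)"
    by (rule sum.inter_filter[symmetric]) (rule assms(1))
  also have "\<dots> = real (card {b\<in>B. Q b})" by simp
  also have "card {b\<in>B. Q b} \<le> card {c}" using assms by (intro card_mono) auto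
  finally show ?thesis by simp
qed

locale pfs =
  fixes r :: nat and T :: "nat \<Rightarrow> nat \<Rightarrow> real" and x y :: "nat \<Rightarrow> real" and lam :: real
  assumes T01: "\<forall>a<r. \<forall>b<r. T a b = 0 \<or> T a b = 1"
    and xpos: "\<forall>i<r. x i > 0" and xeig: "\<forall>i<r. (\<Sum>j<r. T i j * x j) = lam * x i"
    and ypos: "\<forall>i<r. y i > 0" and yeig: "\<forall>i<r. (\<Sum>j<r. T j i * y j) = lam * y i"
begin

lemma sum_succ_x:
  assumes a: "a < r"
  shows "(\<Sum>b\<in>{b. b < r \<and> T a b = 1}. x b) = lam * x a"
proof -
  have "(\<Sum>j<r. T a j * x j) = (\<Sum>j<r. if T a j = 1 then x j else 0)"
    using T01 a by (intro sum.cong) force+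
  also have "\<dots> = (\<Sum>j\<in>{j\<in>{..<r}. T a j = 1}. x j)" by (rule sum.inter_filter[symmetric]) simp
  finally show ?thesis using xeig a by simp
qed

lemma sum_pred_y:
  assumes a: "a < r"
  shows "(\<Sum>c\<in>{c. c < r \<and> T c a = 1}. y c) = lam * y a"
proof -
  have "(\<Sum>j<r. T j a * y j) = (\<Sum>j<r. if T j a = 1 then y j else 0)"
    using T01 a by (intro sum.cong) force+
  also have "\<dots> = (\<Sum>j\<in>{j\<in>{..<r}. T j a = 1}. y j)" by (rule sum.inter_filter[symmetric]) simp
  finally show ?thesis using yeig a by simp
qed

lemma adm_hd: "admissible r T k u \<Longrightarrow> k \<ge> 1 \<Longrightarrow> hd u < r"
  unfolding admissible_def by (cases u) auto

lemma adm_last: "admissible r T k u \<Longrightarrow> k \<ge> 1 \<Longrightarrow> last u < r"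
  unfolding admissible_def by (metis One_nat_def last_in_set le_zero_eq lessThan_iff list.size(3) n_not_Suc_n subsetD)

lemma X_eig:
  assumes k: "k \<ge> 2" and u: "u \<in> adm_words r T k"
  shows "opR (adm_words r T k) (Tk_mat r T k) (\<lambda>v. x (hd v)) u = lam * x (hd u)"
proof -
  have "hd u < r" using u k by (intro adm_hd[of k]) (auto simp: adm_words_def)
  thus ?thesis unfolding opR_def pred_sum[OF k u] using sum_succ_x by simp
qed

definition P :: "nat \<Rightarrow> nat list \<Rightarrow> nat \<Rightarrow> nat list \<Rightarrow> real" where
  "P k w L u = (if take L u = drop (k + 1 - L) w then 1 else 0)"

definition Dw :: "nat \<Rightarrow> real \<Rightarrow> nat list \<Rightarrow> nat list \<Rightarrow> real" where
  "Dw k \<rho> w u = (\<Sum>L\<in>{1..k}. x (hd w) * \<rho> ^ (k + 1 - L) * P k w L u)"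

lemma Dw_nonneg:
  assumes "\<rho> \<ge> 0" "admissible r T (k + 1) w"
  shows "Dw k \<rho> w u \<ge> 0"
proof -
  have "x (hd w) > 0" using adm_hd[OF assms(2)] xpos by simp
  thus ?thesis unfolding Dw_def P_def using assms(1) by (intro sum_nonneg) auto
qed

lemma P_step:
  assumes k: "k \<ge> 2" and u: "u \<in> adm_words r T k" and w: "admissible r T (k + 1) w"
    and L: "1 \<le> L'" "L' < k"
  shows "(\<Sum>b\<in>{b. b < r \<and> T (hd u) b = 1}. P k w (Suc L') (b # butlast u)) \<le> P k w L' u"
proof -
  have lu: "length u = k" using u by (simp add: adm_words_def admissible_def)
  have lw: "length w = k + 1" using w by (simp add: admissible_def)
  have tb: "take L' (butlast u) = take L' u" using L lu by (simp add: take_butlast)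
  have dw: "drop (k + 1 - Suc L') w = w ! (k - L') # drop (k + 1 - L') w"
  proof -
    have "k - L' < length w" using lw by simp
    hence "drop (k - L') w = w ! (k - L') # drop (Suc (k - L')) w" by (rule Cons_nth_drop_Suc[symmetric])
    moreover have "Suc (k - L') = k + 1 - L'" using L by simp
    ultimately show ?thesis by simp
  qed
  have eq: "P k w (Suc L') (b # butlast u) = (if b = w ! (k - L') \<and> take L' u = drop (k + 1 - L') w then 1 else 0)" for b
    unfolding P_def using tb dw by simp
  show ?thesis
  proof (cases "take L' u = drop (k + 1 - L') w")
    case True
    have "(\<Sum>b\<in>{b. b < r \<and> T (hd u) b = 1}. P k w (Suc L') (b # butlast u))
        = (\<Sum>b\<in>{b. b < r \<and> T (hd u) b = 1}. if b = w ! (k - L') \<and> take L' u = drop (k + 1 - L') w then 1 else 0)"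
      using eq by simp
    also have "\<dots> \<le> 1" by (rule sum_le_one) auto
    finally show ?thesis using True by (simp add: P_def)
  next
    case False
    then show ?thesis using eq by (simp add: P_def)
  qed
qed

lemma P_one:
  assumes k: "k \<ge> 2" and u: "u \<in> adm_words r T k" and w: "admissible r T (k + 1) w"
  shows "(\<Sum>b\<in>{b. b < r \<and> T (hd u) b = 1}. P k w 1 (b # butlast u)) \<le> 1"
proof -
  have "(\<Sum>b\<in>{b. b < r \<and> T (hd u) b = 1}. P k w 1 (b # butlast u))
      = (\<Sum>b\<in>{b. b < r \<and> T (hd u) b = 1}. if [b] = drop k w then 1 else 0)"
    unfolding P_def by simp
  also have "\<dots> \<le> 1" by (rule sum_le_one[where c = "hd (drop k w)"]) (simp, metis list.sel(1))
  finally show ?thesis .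
qed

lemma P_top:
  assumes u: "u \<in> adm_words r T k"
  shows "P k w k u = (if u = tl w then 1 else 0)"
proof -
  have "length u = k" using u by (simp add: adm_words_def admissible_def)
  thus ?thesis unfolding P_def by (simp add: drop_Suc)
qed

lemma Dw_step:
  assumes k: "k \<ge> 2" and u: "u \<in> adm_words r T k" and w: "admissible r T (k + 1) w"
    and rho: "\<rho> > 0" and mu: "\<rho> * \<mu> = 1"
  shows "opR (adm_words r T k) (Tk_mat r T k) (Dw k \<rho> w) u
           \<le> \<rho> ^ k * x (hd w) + \<mu> * Dw k \<rho> w u - x (hd w) * (if u = tl w then 1 else 0)"
proof -
  define B where "B = {b. b < r \<and> T (hd u) b = 1}"
  define c where "c L = x (hd w) * \<rho> ^ (k + 1 - L)" for L
  have xw: "x (hd w) > 0" using adm_hd[OF w] xpos by simp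
  have c0: "c L \<ge> 0" for L unfolding c_def using xw rho by simp
  have finB: "finite B" unfolding B_def by simp
  obtain k' where k': "k = Suc k'" "k' \<ge> 1" using k by (cases k) auto
  define bnd where "bnd L = (if L = 1 then 1 else P k w (L - 1) u)" for L
  have "opR (adm_words r T k) (Tk_mat r T k) (Dw k \<rho> w) u = (\<Sum>b\<in>B. Dw k \<rho> w (b # butlast u))"
    unfolding opR_def pred_sum[OF k u] B_def ..
  also have "\<dots> = (\<Sum>L\<in>{1..k}. c L * (\<Sum>b\<in>B. P k w L (b # butlast u)))"
    unfolding Dw_def c_def by (simp add: sum_distrib_left sum.swap[of _ B])
  also have "\<dots> \<le> (\<Sum>L\<in>{1..k}. c L * bnd L)"
  proof (rule sum_mono)
    fix L assume L: "L \<in> {1..k}"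
    show "c L * (\<Sum>b\<in>B. P k w L (b # butlast u)) \<le> c L * bnd L"
    proof (rule mult_left_mono[OF _ c0])
      show "(\<Sum>b\<in>B. P k w L (b # butlast u)) \<le> bnd L"
      proof (cases "L = 1")
        case True then show ?thesis using P_one[OF k u w] by (simp add: bnd_def B_def)
      next
        case False
        then obtain L' where L': "L = Suc L'" "1 \<le> L'" "L' < k" using L by (cases L) auto
        show ?thesis using P_step[OF k u w L'(2,3)] L' by (simp add: bnd_def B_def)
      qed
    qed
  qed
  also have "(\<Sum>L\<in>{1..k}. c L * bnd L) = c 1 + (\<Sum>L\<in>{1..k'}. c (Suc L) * P k w L u)"
  proof -
    have "(\<Sum>L\<in>{1..k}. c L * bnd L) = c 1 * bnd 1 + (\<Sum>L\<in>{Suc 1..Suc k'}. c L * bnd L)"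
      using k' by (simp add: sum.atLeast_Suc_atMost)
    also have "(\<Sum>L\<in>{Suc 1..Suc k'}. c L * bnd L) = (\<Sum>L\<in>{1..k'}. c (Suc L) * bnd (Suc L))"
      by (rule sum.shift_bounds_cl_Suc_ivl)
    also have "\<dots> = (\<Sum>L\<in>{1..k'}. c (Suc L) * P k w L u)"
      by (intro sum.cong) (auto simp: bnd_def)
    finally show ?thesis by (simp add: bnd_def)
  qed
  also have "\<mu> * Dw k \<rho> w u = (\<Sum>L\<in>{1..k'}. c (Suc L) * P k w L u) + x (hd w) * P k w k u"
  proof -
    have "\<mu> * Dw k \<rho> w u = (\<Sum>L\<in>{1..k}. x (hd w) * \<rho> ^ (k - L) * P k w L u)"
      unfolding Dw_def sum_distrib_left
    proof (intro sum.cong refl)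
      fix L assume "L \<in> {1..k}"
      hence "k + 1 - L = Suc (k - L)" by auto
      thus "\<mu> * (x (hd w) * \<rho> ^ (k + 1 - L) * P k w L u) = x (hd w) * \<rho> ^ (k - L) * P k w L u"
        using mu by (simp add: algebra_simps)
    qed
    also have "\<dots> = (\<Sum>L\<in>{1..k'}. x (hd w) * \<rho> ^ (k - L) * P k w L u) + x (hd w) * P k w k u"
      using k' by (simp add: sum.cl_ivl_Suc)
    also have "(\<Sum>L\<in>{1..k'}. x (hd w) * \<rho> ^ (k - L) * P k w L u) = (\<Sum>L\<in>{1..k'}. c (Suc L) * P k w L u)"
    proof (intro sum.cong refl)
      fix L assume "L \<in> {1..k'}"
      hence "k + 1 - Suc L = k - L" using k' by auto
      thus "x (hd w) * \<rho> ^ (k - L) * P k w L u = c (Suc L) * P k w L u" unfolding c_def by simp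
    qed
    finally show ?thesis .
  qed
  moreover have "c 1 = \<rho> ^ k * x (hd w)" unfolding c_def by simp
  ultimately show ?thesis using P_top[OF u, of w] by simp
qed

end



context pfs
begin

lemma adm_butlast_w:
  assumes w: "admissible r T (k + 1) w" and k1: "k \<ge> 1"
  shows "butlast w \<in> adm_words r T k" "hd (butlast w) = hd w"
proof -
  have lw: "length w = k + 1" using w by (simp add: admissible_def)
  have "butlast w = take k w" using lw by (simp add: butlast_conv_take)
  thus "butlast w \<in> adm_words r T k" using adm_take[OF w, of k] by (simp add: adm_words_def)
  show "hd (butlast w) = hd w" using lw k1 by (cases w) auto
qed

lemma E_sum:
  assumes k: "k \<ge> 1" and w: "admissible r T (k + 1) w"
  shows "(\<Sum>v\<in>adm_words r T k. E_mat w u v * F v) = (if u = tl w then F (butlast w) else 0)"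
proof -
  have bw: "butlast w \<in> adm_words r T k" by (rule adm_butlast_w(1)[OF w k])
  have "(\<Sum>v\<in>adm_words r T k. E_mat w u v * F v)
      = (\<Sum>v\<in>adm_words r T k. if v = butlast w then (if u = tl w then F v else 0) else 0)"
    unfolding E_mat_def by (intro sum.cong) auto
  also have "\<dots> = (if u = tl w then F (butlast w) else 0)"
    using bw adm_finite by (simp add: sum.delta)
  finally show ?thesis .
qed

lemma A_bounds:
  assumes k: "k \<ge> 1" and C: "finite C" "C \<subseteq> adm_words r T (k + 1)"
    and u: "u \<in> adm_words r T k" and v: "v \<in> adm_words r T k"
  shows "0 \<le> Tk_forbid r T k C u v \<and> Tk_forbid r T k C u v \<le> Tk_mat r T k u v"
proof (cases "\<exists>w\<in>C. u = tl w \<and> v = butlast w")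
  case True
  then obtain w0 where w0: "w0 \<in> C" "u = tl w0" "v = butlast w0" by blast
  have w0a: "admissible r T (k + 1) w0" using C w0 by (auto simp: adm_words_def)
  have lw0: "length w0 = k + 1" using w0a by (simp add: admissible_def)
  have uniq: "w = w0" if "w \<in> C" "u = tl w \<and> v = butlast w" for w
  proof -
    have wa: "admissible r T (k + 1) w" using C that by (auto simp: adm_words_def)
    have lw: "length w = k + 1" using wa by (simp add: admissible_def)
    have "hd w = hd v" using adm_butlast_w(2)[OF wa k] that by simp
    moreover have "hd w0 = hd v" using adm_butlast_w(2)[OF w0a k] w0 by simp
    moreover have "w = hd w # tl w" "w0 = hd w0 # tl w0" using lw lw0 by (cases w, auto, cases w0, auto)
    ultimately show ?thesis using that w0 by metis
  qed
  have "(\<Sum>w\<in>C. E_mat w u v) = (\<Sum>w\<in>C. if u = tl w \<and> v = butlast w then 1 else 0)"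
    unfolding E_mat_def by simp
  also have "\<dots> \<le> 1" by (rule sum_le_one[OF C(1) uniq]) auto
  finally have le1: "(\<Sum>w\<in>C. E_mat w u v) \<le> 1" .
  have ge0: "(\<Sum>w\<in>C. E_mat w u v) \<ge> 0" unfolding E_mat_def by (intro sum_nonneg) auto
  have "Tk_mat r T k u v = 1"
  proof -
    have "w0 \<noteq> []" using lw0 by auto
    hence "tl w0 = tl (butlast w0) @ [last w0]" using lw0 k
      by (metis append_butlast_last_id butlast.simps(2) butlast_tl length_greater_0_conv list.sel(3) tl_append2 length_butlast add_diff_cancel_right' less_numeral_extra(3) list.size(3) le_zero_eq one_neq_zero)
    thus ?thesis using u v w0 by (auto simp: Tk_mat_def adm_words_def)
  qed
  then show ?thesis using le1 ge0 by (simp add: Tk_forbid_def)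
next
  case False
  hence "(\<Sum>w\<in>C. E_mat w u v) = 0" unfolding E_mat_def by (intro sum.neutral) auto
  then show ?thesis by (simp add: Tk_forbid_def Tk_mat_def)
qed

end



context pfs
begin

lemma main_ineq:
  assumes k: "k \<ge> 2" and rho: "\<rho> > 0" and mu: "\<rho> * \<mu> = 1"
    and C: "finite C" "C \<subseteq> adm_words r T (k + 1)" and u: "u \<in> adm_words r T k"
  shows "opR (adm_words r T k) (Tk_forbid r T k C) (\<lambda>v. x (hd v) - (\<Sum>w\<in>C. Dw k \<rho> w v)) u
     \<ge> \<mu> * (x (hd u) - (\<Sum>w\<in>C. Dw k \<rho> w u)) + (lam - \<mu>) * x (hd u) - \<rho> ^ k * (\<Sum>w\<in>C. x (hd w))"
proof -
  define S where "S = adm_words r T k"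
  define z where "z v = x (hd v) - (\<Sum>w\<in>C. Dw k \<rho> w v)" for v
  have k1: "k \<ge> 1" using k by simp
  have Ca: "admissible r T (k + 1) w" if "w \<in> C" for w using C that by (auto simp: adm_words_def)
  have h1: "opR S (Tk_forbid r T k C) z u = opR S (Tk_mat r T k) z u - (\<Sum>w\<in>C. \<Sum>v\<in>S. E_mat w u v * z v)"
    unfolding opR_def Tk_forbid_def
    by (simp add: left_diff_distrib sum_subtractf sum_distrib_right sum.swap[of _ C])
  have h2: "(\<Sum>v\<in>S. E_mat w u v * z v) \<le> x (hd w) * (if u = tl w then 1 else 0)" if w: "w \<in> C" for w
  proof -
    have "(\<Sum>v\<in>S. E_mat w u v * z v) = (if u = tl w then z (butlast w) else 0)"
      unfolding S_def by (rule E_sum[OF k1 Ca[OF w]])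
    moreover have "z (butlast w) \<le> x (hd w)"
    proof -
      have "(\<Sum>w'\<in>C. Dw k \<rho> w' (butlast w)) \<ge> 0"
        using Dw_nonneg Ca rho by (intro sum_nonneg) auto
      thus ?thesis unfolding z_def using adm_butlast_w(2)[OF Ca[OF w] k1] by simp
    qed
    ultimately show ?thesis by simp
  qed
  have h2': "(\<Sum>w\<in>C. \<Sum>v\<in>S. E_mat w u v * z v) \<le> (\<Sum>w\<in>C. x (hd w) * (if u = tl w then 1 else 0))"
    using h2 by (rule sum_mono)
  have h4: "opR S (Tk_mat r T k) z u = lam * x (hd u) - (\<Sum>w\<in>C. opR S (Tk_mat r T k) (Dw k \<rho> w) u)"
  proof -
    have "opR S (Tk_mat r T k) z u = opR S (Tk_mat r T k) (\<lambda>v. x (hd v) - 1 * (\<Sum>w\<in>C. Dw k \<rho> w v)) u"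
      unfolding z_def by simp
    also have "\<dots> = opR S (Tk_mat r T k) (\<lambda>v. x (hd v)) u - 1 * opR S (Tk_mat r T k) (\<lambda>v. \<Sum>w\<in>C. Dw k \<rho> w v) u"
      by (rule opR_diff)
    also have "opR S (Tk_mat r T k) (\<lambda>v. \<Sum>w\<in>C. Dw k \<rho> w v) u = (\<Sum>w\<in>C. opR S (Tk_mat r T k) (Dw k \<rho> w) u)"
      by (rule opR_sum)
    also have "opR S (Tk_mat r T k) (\<lambda>v. x (hd v)) u = lam * x (hd u)"
      unfolding S_def by (rule X_eig[OF k u])
    finally show ?thesis by simp
  qed
  have h5: "(\<Sum>w\<in>C. opR S (Tk_mat r T k) (Dw k \<rho> w) u)
      \<le> (\<Sum>w\<in>C. \<rho> ^ k * x (hd w) + \<mu> * Dw k \<rho> w u - x (hd w) * (if u = tl w then 1 else 0))"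
    unfolding S_def by (rule sum_mono) (rule Dw_step[OF k u Ca rho mu])
  have h6: "(\<Sum>w\<in>C. \<rho> ^ k * x (hd w) + \<mu> * Dw k \<rho> w u - x (hd w) * (if u = tl w then 1 else 0))
      = \<rho> ^ k * (\<Sum>w\<in>C. x (hd w)) + \<mu> * (\<Sum>w\<in>C. Dw k \<rho> w u) - (\<Sum>w\<in>C. x (hd w) * (if u = tl w then 1 else 0))"
    by (simp add: sum.distrib sum_subtractf sum_distrib_left)
  have "opR S (Tk_forbid r T k C) z u \<ge> \<mu> * z u + (lam - \<mu>) * x (hd u) - \<rho> ^ k * (\<Sum>w\<in>C. x (hd w))"
    using h1 h2' h4 h5 h6 unfolding z_def by (simp add: algebra_simps)
  thus ?thesis unfolding S_def z_def by simp
qed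

lemma W:
  assumes L: "1 \<le> L" and s: "admissible r T L s"
  shows "(\<Sum>u\<in>{u \<in> adm_words r T (L + m). take L u = s}. y (last u)) = lam ^ m * y (last s)"
proof (induction m)
  case 0
  have "{u \<in> adm_words r T (L + 0). take L u = s} = {s}"
    using s by (auto simp: adm_words_def admissible_def)
  then show ?case by simp
next
  case (Suc m)
  define A where "A = {u \<in> adm_words r T (L + m). take L u = s}"
  define Cs where "Cs u = {c. c < r \<and> T c (last u) = 1}" for u
  have img: "{u \<in> adm_words r T (L + Suc m). take L u = s} = (\<lambda>(u, c). u @ [c]) ` (SIGMA u:A. Cs u)"
  proof (intro equalityI subsetI)
    fix u' assume "u' \<in> {u \<in> adm_words r T (L + Suc m). take L u = s}"
    hence u'a: "admissible r T (Suc (L + m)) u'" and tk: "take L u' = s" by (auto simp: adm_words_def)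
    have lu': "length u' = Suc (L + m)" using u'a by (simp add: admissible_def)
    hence ne: "u' \<noteq> []" by auto
    have lb: "length (butlast u') = L + m" using lu' by simp
    have bne: "butlast u' \<noteq> []" using lb L by (cases "butlast u'") auto
    have eq: "u' = butlast u' @ [last u']" using ne by simp
    have "admissible r T (Suc (L + m)) (butlast u' @ [last u'])" using u'a eq by simp
    hence p: "last u' < r" "admissible r T (L + m) (butlast u')" "T (last u') (last (butlast u')) = 1"
      using bne by (simp_all only: adm_snoc) blast+
    have "length (butlast u') = L + m" using p(2) by (simp add: admissible_def)
    have "take L (butlast u') = take L u'" using lu' by (simp add: take_butlast)
    hence "butlast u' \<in> A" using p tk by (simp add: A_def adm_words_def)
    moreover have "last u' \<in> Cs (butlast u')" using p by (simp add: Cs_def)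
    ultimately show "u' \<in> (\<lambda>(u, c). u @ [c]) ` (SIGMA u:A. Cs u)"
      using eq by (intro image_eqI[of _ _ "(butlast u', last u')"]) auto
  next
    fix u' assume "u' \<in> (\<lambda>(u, c). u @ [c]) ` (SIGMA u:A. Cs u)"
    then obtain u c where uc: "u' = u @ [c]" "u \<in> A" "c \<in> Cs u" by auto
    have ua: "admissible r T (L + m) u" and tk: "take L u = s" using uc by (auto simp: A_def adm_words_def)
    have lu: "length u = L + m" using ua by (simp add: admissible_def)
    have "admissible r T (Suc (L + m)) (u @ [c])" using ua uc(3) by (simp only: adm_snoc) (simp add: Cs_def)
    moreover have "take L (u @ [c]) = s" using lu tk by simp
    ultimately show "u' \<in> {u \<in> adm_words r T (L + Suc m). take L u = s}" using uc by (simp add: adm_words_def)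
  qed
  have finA: "finite A" unfolding A_def using adm_finite by simp
  have inj: "inj_on (\<lambda>(u, c). u @ [c]) (SIGMA u:A. Cs u)" by (auto simp: inj_on_def)
  have "(\<Sum>u\<in>{u \<in> adm_words r T (L + Suc m). take L u = s}. y (last u))
      = (\<Sum>(u, c)\<in>(SIGMA u:A. Cs u). y c)"
    unfolding img by (subst sum.reindex[OF inj]) (simp add: case_prod_beta)
  also have "\<dots> = (\<Sum>u\<in>A. \<Sum>c\<in>Cs u. y c)" using finA by (subst sum.Sigma) (auto simp: Cs_def)
  also have "\<dots> = (\<Sum>u\<in>A. lam * y (last u))"
  proof (intro sum.cong refl)
    fix u assume "u \<in> A"
    hence "admissible r T (L + m) u" by (simp add: A_def adm_words_def)
    hence "last u < r" using adm_last[of "L + m" u] L by simp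
    thus "(\<Sum>c\<in>Cs u. y c) = lam * y (last u)" unfolding Cs_def by (rule sum_pred_y)
  qed
  also have "\<dots> = lam * (\<Sum>u\<in>A. y (last u))" by (simp add: sum_distrib_left)
  also have "\<dots> = lam * lam ^ m * y (last s)" using Suc.IH by (simp add: A_def)
  finally show ?case by simp
qed

lemma W1:
  assumes k: "k \<ge> 1"
  shows "(\<Sum>u\<in>adm_words r T k. y (last u) * x (hd u)) = lam ^ (k - 1) * (\<Sum>a<r. x a * y a)"
proof -
  have hdS: "hd ` adm_words r T k \<subseteq> {..<r}" using adm_hd k by (auto simp: adm_words_def)
  have "(\<Sum>u\<in>adm_words r T k. y (last u) * x (hd u))
      = (\<Sum>a\<in>{..<r}. \<Sum>u\<in>{u \<in> adm_words r T k. hd u = a}. y (last u) * x (hd u))"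
    by (rule sum.group[symmetric, OF adm_finite _ hdS]) simp
  also have "\<dots> = (\<Sum>a\<in>{..<r}. x a * (lam ^ (k - 1) * y a))"
  proof (intro sum.cong refl)
    fix a assume a: "a \<in> {..<r}"
    have t1: "take 1 u = [hd u]" if "u \<in> adm_words r T k" for u
    proof -
      have "length u = k" using that by (simp add: adm_words_def admissible_def)
      thus ?thesis using k by (cases u) auto
    qed
    have kk: "1 + (k - 1) = k" using k by simp
    have set: "{u \<in> adm_words r T k. hd u = a} = {u \<in> adm_words r T (1 + (k - 1)). take 1 u = [a]}"
      unfolding kk using t1 by auto
    have sa: "admissible r T 1 [a]" using a by (simp add: admissible_def)
    have "(\<Sum>u\<in>{u \<in> adm_words r T k. hd u = a}. y (last u) * x (hd u))
        = x a * (\<Sum>u\<in>{u \<in> adm_words r T k. hd u = a}. y (last u))"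
      by (simp add: sum_distrib_left mult.commute)
    also have "\<dots> = x a * (lam ^ (k - 1) * y a)" unfolding set using W[OF _ sa, of "k - 1"] by simp
    finally show "(\<Sum>u\<in>{u \<in> adm_words r T k. hd u = a}. y (last u) * x (hd u)) = x a * (lam ^ (k - 1) * y a)" .
  qed
  finally show ?thesis by (simp add: sum_distrib_left algebra_simps)
qed

end



context pfs
begin

lemma W2:
  assumes k: "k \<ge> 1" and w: "admissible r T (k + 1) w" and L: "1 \<le> L" "L \<le> k"
  shows "(\<Sum>u\<in>adm_words r T k. y (last u) * P k w L u) = lam ^ (k - L) * y (last w)"
proof -
  define s where "s = drop (k + 1 - L) w"
  have lw: "length w = k + 1" using w by (simp add: admissible_def)
  have sa: "admissible r T L s" using adm_drop[OF w, of "k + 1 - L"] L unfolding s_def by simp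
  have ls: "last s = last w" unfolding s_def using L lw by (simp add: last_drop)
  have kk: "L + (k - L) = k" using L by simp
  have "(\<Sum>u\<in>adm_words r T k. y (last u) * P k w L u) = (\<Sum>u\<in>adm_words r T k. if take L u = s then y (last u) else 0)"
    unfolding P_def s_def by (intro sum.cong) auto
  also have "\<dots> = (\<Sum>u\<in>{u\<in>adm_words r T k. take L u = s}. y (last u))"
    by (rule sum.inter_filter[symmetric]) (rule adm_finite)
  also have "\<dots> = lam ^ (k - L) * y (last s)" using W[OF L(1) sa, of "k - L"] unfolding kk .
  finally show ?thesis using ls by simp
qed

lemma Dw_avg:
  assumes k: "k \<ge> 1" and w: "admissible r T (k + 1) w"
  shows "(\<Sum>u\<in>adm_words r T k. y (last u) * Dw k \<rho> w u)
     = x (hd w) * y (last w) * (\<Sum>L\<in>{1..k}. \<rho> ^ (k + 1 - L) * lam ^ (k - L))"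
proof -
  have "(\<Sum>u\<in>adm_words r T k. y (last u) * Dw k \<rho> w u)
      = (\<Sum>L\<in>{1..k}. x (hd w) * \<rho> ^ (k + 1 - L) * (\<Sum>u\<in>adm_words r T k. y (last u) * P k w L u))"
    unfolding Dw_def by (simp add: sum_distrib_left sum.swap[of _ "adm_words r T k"] algebra_simps)
  also have "\<dots> = (\<Sum>L\<in>{1..k}. x (hd w) * \<rho> ^ (k + 1 - L) * (lam ^ (k - L) * y (last w)))"
    by (intro sum.cong refl) (simp add: W2[OF k w])
  finally show ?thesis by (simp add: sum_distrib_left algebra_simps)
qed

lemma pos_witness:
  assumes k: "k \<ge> 1" and C: "finite C" "C \<subseteq> adm_words r T (k + 1)"
    and gt: "lam ^ (k - 1) * (\<Sum>a<r. x a * y a)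
       > (\<Sum>w\<in>C. x (hd w) * y (last w) * (\<Sum>L\<in>{1..k}. \<rho> ^ (k + 1 - L) * lam ^ (k - L)))"
  shows "\<exists>u\<in>adm_words r T k. x (hd u) - (\<Sum>w\<in>C. Dw k \<rho> w u) > 0"
proof (rule ccontr)
  assume "\<not> ?thesis"
  hence np: "\<forall>u\<in>adm_words r T k. x (hd u) - (\<Sum>w\<in>C. Dw k \<rho> w u) \<le> 0" by force
  have Ca: "admissible r T (k + 1) w" if "w \<in> C" for w using C that by (auto simp: adm_words_def)
  have "(\<Sum>u\<in>adm_words r T k. y (last u) * (x (hd u) - (\<Sum>w\<in>C. Dw k \<rho> w u)))
     = (\<Sum>u\<in>adm_words r T k. y (last u) * x (hd u)) - (\<Sum>w\<in>C. \<Sum>u\<in>adm_words r T k. y (last u) * Dw k \<rho> w u)"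
    by (simp add: right_diff_distrib sum_subtractf sum_distrib_left sum.swap[of _ C])
  also have "\<dots> = lam ^ (k - 1) * (\<Sum>a<r. x a * y a)
      - (\<Sum>w\<in>C. x (hd w) * y (last w) * (\<Sum>L\<in>{1..k}. \<rho> ^ (k + 1 - L) * lam ^ (k - L)))"
    using W1[OF k] Dw_avg[OF k Ca] by simp
  finally have "(\<Sum>u\<in>adm_words r T k. y (last u) * (x (hd u) - (\<Sum>w\<in>C. Dw k \<rho> w u))) > 0"
    using gt by simp
  moreover have "(\<Sum>u\<in>adm_words r T k. y (last u) * (x (hd u) - (\<Sum>w\<in>C. Dw k \<rho> w u))) \<le> 0"
  proof (rule sum_nonpos)
    fix u assume u: "u \<in> adm_words r T k"
    have "y (last u) > 0" using adm_last[of k u] u k ypos by (simp add: adm_words_def)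
    thus "y (last u) * (x (hd u) - (\<Sum>w\<in>C. Dw k \<rho> w u)) \<le> 0" using np u
      by (simp add: mult_nonneg_nonpos)
  qed
  ultimately show False by simp
qed

end



lemma powr_neg_half:
  assumes "(l::real) > 0"
  shows "l powr (- real k / 2) = 1 / (sqrt l) ^ k"
proof -
  have "l powr (real k / 2) = l powr (1/2 * real k)" by simp
  also have "\<dots> = (l powr (1/2)) powr (real k)" by (rule powr_powr[symmetric])
  also have "\<dots> = (sqrt l) ^ k" using assms by (simp add: powr_half_sqrt powr_realpow)
  finally have "l powr (real k / 2) = (sqrt l) ^ k" .
  moreover have "l powr (- real k / 2) = 1 / l powr (real k / 2)"
    using assms by (simp add: powr_minus_divide)
  ultimately show ?thesis by simp
qed

lemma sqrt_le_mid: "(l::real) \<ge> 0 \<Longrightarrow> sqrt l \<le> (l + 1) / 2"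
proof -
  assume l: "l \<ge> 0"
  have "0 \<le> (sqrt l - 1)^2" by simp
  also have "(sqrt l - 1)^2 = l - 2 * sqrt l + 1" using l by (simp add: power2_eq_square algebra_simps)
  finally show ?thesis by simp
qed

lemma pow_ge_lin: "(c::real) > 1 \<Longrightarrow> real k * (c - 1) \<le> c ^ k"
  using Bernoulli_inequality[of "c - 1" k] by simp


lemma R1: "(\<mu>::real) > 1 \<Longrightarrow> 1/\<mu> * (1/\<mu> * lam)^k = lam^k / \<mu>^(k+1)"
  by (simp add: power_divide)

lemma R2: "(m0::real) > 1 \<Longrightarrow> m0 ^ k = ((1 + (sqrt m0 - 1)) ^ k) ^ 2"
proof -
  assume "m0 > 1"
  hence "(1 + (sqrt m0 - 1)) ^ 2 = m0" by simp
  hence "m0 ^ k = ((1 + (sqrt m0 - 1)) ^ 2) ^ k" by simp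
  also have "\<dots> = ((1 + (sqrt m0 - 1)) ^ k) ^ 2" by (metis power_mult mult.commute)
  finally show ?thesis .
qed

lemma R3:
  fixes lam \<mu> X sxy :: real
  assumes key: "2 * X * lam * real k < sxy * \<mu> ^ (k + 1)" and "lam > 1" "k \<ge> 1" "\<mu> > 1"
  shows "2 * X * real k * lam ^ k / \<mu> ^ (k + 1) < lam ^ (k - 1) * sxy"
proof -
  have lk: "lam ^ k = lam * lam ^ (k - 1)" using assms by (cases k) auto
  have "2 * X * real k * lam ^ k = (2 * X * lam * real k) * lam ^ (k - 1)"
    unfolding lk by (simp add: algebra_simps)
  also have "\<dots> < (sxy * \<mu> ^ (k + 1)) * lam ^ (k - 1)" using key assms by (intro mult_strict_right_mono) auto
  finally have "2 * X * real k * lam ^ k < lam ^ (k - 1) * sxy * \<mu> ^ (k + 1)" by (simp add: algebra_simps)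
  moreover have "\<mu> ^ (k + 1) > 0" using assms by simp
  ultimately show ?thesis by (simp add: divide_less_eq)
qed


lemma R4:
  fixes Cc b lam :: real
  assumes kK1: "real k > 2 * Cc / (b * (lam - 1))" and b0: "b > 0" and lam1: "lam > 1" and k1: "k \<ge> 1"
  shows "Cc / (real k * b) \<le> (lam - 1) / 2"
proof -
  have p: "b * (lam - 1) > 0" using b0 lam1 by simp
  have "2 * Cc < real k * (b * (lam - 1))" using kK1 p by (simp add: pos_divide_less_eq)
  hence "Cc * 2 \<le> (lam - 1) * (real k * b)" by (simp add: algebra_simps)
  moreover have "real k * b > 0" using b0 k1 by simp
  ultimately show ?thesis by (simp add: pos_divide_le_eq pos_le_divide_eq mult.commute)
qed


theorem theorem1p6:
  fixes r :: nat and T :: "nat \<Rightarrow> nat \<Rightarrow> real"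
  assumes r_pos: "0 < r"
    and T01: "\<forall>x<r. \<forall>y<r. T x y = 0 \<or> T x y = 1"
    and irr: "irreducible01 r T"
    and gt1: "pf_eigenvalue {..<r} T > 1"
  shows "\<exists>C>0. \<exists>K::nat. \<forall>k\<ge>K. \<forall>w1 w2.
           admissible r T (k + 1) w1 \<longrightarrow> admissible r T (k + 1) w2 \<longrightarrow>
           \<bar>pf_eigenvalue (adm_words r T k) (Tk_forbid r T k {w1, w2})
              - pf_eigenvalue {..<r} T\<bar>
             \<le> C * pf_eigenvalue {..<r} T powr (- real k / 2)"
proof -
  define lam where "lam = spec_radius {..<r} T"
  have lam1: "lam > 1" using gt1 unfolding lam_def by simp
  define R where "R = {(a, b). a < r \<and> b < r \<and> T b a = 1}"
  have irr': "\<forall>a<r. \<forall>b<r. (a, b) \<in> {(a, b). a < r \<and> b < r \<and> T b a = 1}\<^sup>*"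
    using irr unfolding irreducible01_def by blast
  obtain x where xpos: "\<forall>i<r. x i > 0" and xe: "\<forall>i<r. opR {..<r} T x i = lam * x i"
    using pf_exists[OF r_pos T01 irr'] unfolding lam_def by blast
  define T' where "T' a b = T b a" for a b
  have T01': "\<forall>a<r. \<forall>b<r. T' a b = 0 \<or> T' a b = 1" using T01 unfolding T'_def by blast
  have irrT': "\<forall>a<r. \<forall>b<r. (a, b) \<in> {(a, b). a < r \<and> b < r \<and> T' b a = 1}\<^sup>*"
  proof (intro allI impI)
    fix a b assume ab: "a < r" "b < r"
    have "(b, a) \<in> R\<^sup>*" using irr' ab unfolding R_def by blast
    hence "(a, b) \<in> (R\<inverse>)\<^sup>*" by (rule rtrancl_converseI)
    moreover have "R\<inverse> = {(a, b). a < r \<and> b < r \<and> T' b a = 1}" unfolding R_def T'_def by auto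
    ultimately show "(a, b) \<in> {(a, b). a < r \<and> b < r \<and> T' b a = 1}\<^sup>*" by simp
  qed
  obtain y where ypos: "\<forall>i<r. y i > 0" and ye: "\<forall>i<r. opR {..<r} T' y i = spec_radius {..<r} T' * y i"
    using pf_exists[OF r_pos T01' irrT'] by blast
  define lam' where "lam' = spec_radius {..<r} T'"
  have sxy: "(\<Sum>a<r. x a * y a) > 0"
    using xpos ypos r_pos by (intro sum_pos) auto
  have "(\<Sum>i<r. y i * opR {..<r} T x i) = (\<Sum>i<r. \<Sum>j<r. y i * T i j * x j)"
    unfolding opR_def by (simp add: sum_distrib_left mult.assoc)
  also have "\<dots> = (\<Sum>j<r. \<Sum>i<r. y i * T i j * x j)" by (rule sum.swap)
  also have "\<dots> = (\<Sum>j<r. x j * opR {..<r} T' y j)"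
    unfolding opR_def T'_def by (simp add: sum_distrib_left algebra_simps)
  finally have "(\<Sum>i<r. y i * opR {..<r} T x i) = (\<Sum>j<r. x j * opR {..<r} T' y j)" .
  hence "(\<Sum>i<r. y i * (lam * x i)) = (\<Sum>j<r. x j * (lam' * y j))"
    using xe ye unfolding lam'_def by simp
  hence "lam * (\<Sum>a<r. x a * y a) = lam' * (\<Sum>a<r. x a * y a)"
    by (simp add: sum_distrib_left algebra_simps)
  hence lam'eq: "lam' = lam" using sxy by simp
  interpret pfs r T x y lam
  proof
    show "\<forall>a<r. \<forall>b<r. T a b = 0 \<or> T a b = 1" by (rule T01)
    show "\<forall>i<r. x i > 0" by (rule xpos)
    show "\<forall>i<r. (\<Sum>j<r. T i j * x j) = lam * x i" using xe unfolding opR_def by simp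
    show "\<forall>i<r. y i > 0" by (rule ypos)
    show "\<forall>i<r. (\<Sum>j<r. T j i * y j) = lam * y i" using ye lam'eq unfolding opR_def T'_def lam'_def by simp
  qed
  have rne: "{..<r} \<noteq> {}" using r_pos by auto
  obtain i1 where i1: "i1 < r" "\<forall>i<r. x i1 \<le> x i" using finite_argmin[of "{..<r}" x] rne by auto
  obtain i2 where i2: "i2 < r" "\<forall>i<r. x i \<le> x i2" using finite_argmax[of "{..<r}" x] rne by auto
  obtain i3 where i3: "i3 < r" "\<forall>i<r. y i \<le> y i3" using finite_argmax[of "{..<r}" y] rne by auto
  define xmin where "xmin = x i1"
  define xmax where "xmax = x i2"
  define ymax where "ymax = y i3"
  define sxy where "sxy = (\<Sum>a<r. x a * y a)"
  have xmin: "xmin > 0" "\<forall>i<r. xmin \<le> x i" using i1 xpos unfolding xmin_def by auto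
  have xmax: "xmax > 0" "\<forall>i<r. x i \<le> xmax" using i2 xpos unfolding xmax_def by auto
  have ymax: "ymax > 0" "\<forall>i<r. y i \<le> ymax" using i3 ypos unfolding ymax_def by auto
  have sxy0: "sxy > 0" using sxy unfolding sxy_def .
  define m0 where "m0 = (lam + 1) / 2"
  define Cc where "Cc = 2 * xmax / xmin"
  define b where "b = sqrt lam - 1"
  define a where "a = sqrt m0 - 1"
  have m01: "m0 > 1" using lam1 unfolding m0_def by simp
  have b0: "b > 0" using lam1 unfolding b_def by simp
  have a0: "a > 0" using m01 unfolding a_def by simp
  have Cc0: "Cc > 0" using xmin xmax unfolding Cc_def by simp
  have sqm0: "sqrt lam \<le> m0" using sqrt_le_mid[of lam] lam1 unfolding m0_def by simp
  define K1 where "K1 = nat \<lceil>2 * Cc / (b * (lam - 1))\<rceil> + 1"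
  define K2 where "K2 = nat \<lceil>(2 * xmax * ymax * lam) / (sxy * a ^ 2)\<rceil> + 1"
  define K where "K = max 2 (max K1 K2)"
  show ?thesis
  proof (intro exI[of _ Cc] conjI exI[of _ K] allI impI)
    show "Cc > 0" by (rule Cc0)
    fix k w1 w2
    assume kK: "K \<le> k" and w1: "admissible r T (k + 1) w1" and w2: "admissible r T (k + 1) w2"
    have k2: "k \<ge> 2" using kK unfolding K_def by simp
    have k1: "k \<ge> 1" using k2 by simp
    have kK1: "real k > 2 * Cc / (b * (lam - 1))" using kK unfolding K_def K1_def by linarith
    have kK2: "real k > (2 * xmax * ymax * lam) / (sxy * a ^ 2)" using kK unfolding K_def K2_def by linarith
    define pw where "pw = lam powr (- real k / 2)"
    have pw: "pw = 1 / (sqrt lam) ^ k" unfolding pw_def using lam1 by (intro powr_neg_half) simp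
    have pw0: "pw > 0" unfolding pw using lam1 by simp
    define \<delta> where "\<delta> = Cc * pw"
    have d0: "\<delta> > 0" unfolding \<delta>_def using Cc0 pw0 by simp
    have dle: "\<delta> \<le> (lam - 1) / 2"
    proof -
      have "real k * b \<le> (sqrt lam) ^ k" using pow_ge_lin[of "sqrt lam" k] lam1 unfolding b_def by simp
      moreover have "real k * b > 0" using k1 b0 by simp
      ultimately have "pw \<le> 1 / (real k * b)" unfolding pw by (intro divide_left_mono) auto
      hence "\<delta> \<le> Cc / (real k * b)" unfolding \<delta>_def using Cc0 by (simp add: mult_left_mono divide_inverse)
      also have "Cc / (real k * b) \<le> (lam - 1) / 2" by (rule R4[OF kK1 b0 lam1 k1])
      finally show ?thesis .
    qed
    define \<mu> where "\<mu> = lam - \<delta>"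
    have mum0: "\<mu> \<ge> m0" using dle unfolding \<mu>_def m0_def by simp
    have mu1: "\<mu> > 1" using mum0 m01 by simp
    have mulam: "\<mu> \<le> lam" using d0 unfolding \<mu>_def by simp
    define \<rho> where "\<rho> = 1 / \<mu>"
    have rho0: "\<rho> > 0" using mu1 unfolding \<rho>_def by simp
    have rhomu: "\<rho> * \<mu> = 1" using mu1 unfolding \<rho>_def by simp
    have rhok: "\<rho> ^ k \<le> pw"
    proof -
      have "(sqrt lam) ^ k \<le> \<mu> ^ k" using sqm0 mum0 lam1 by (intro power_mono) auto
      hence "1 / \<mu> ^ k \<le> 1 / (sqrt lam) ^ k" using lam1 mu1 by (intro divide_left_mono) auto
      thus ?thesis unfolding pw \<rho>_def by (simp add: power_one_over)
    qed
    define Cs where "Cs = {w1, w2}"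
    have Csf: "finite Cs" unfolding Cs_def by simp
    have CsS: "Cs \<subseteq> adm_words r T (k + 1)" using w1 w2 unfolding Cs_def adm_words_def by auto
    have cardCs: "card Cs \<le> 2" unfolding Cs_def by (simp add: card_insert_if)
    have Csa: "admissible r T (k + 1) w" if "w \<in> Cs" for w using CsS that by (auto simp: adm_words_def)
    define S where "S = adm_words r T k"
    define A where "A = Tk_forbid r T k Cs"
    define z where "z v = x (hd v) - (\<Sum>w\<in>Cs. Dw k \<rho> w v)" for v
    have hdS: "hd u < r" if "u \<in> S" for u using adm_hd[of k u] that k1 unfolding S_def adm_words_def by simp
    have gt: "lam ^ (k - 1) * (\<Sum>a<r. x a * y a)
       > (\<Sum>w\<in>Cs. x (hd w) * y (last w) * (\<Sum>L\<in>{1..k}. \<rho> ^ (k + 1 - L) * lam ^ (k - L)))"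
    proof -
      have rl: "\<rho> * lam \<ge> 1" using mulam mu1 unfolding \<rho>_def by simp
      have Lb: "(\<Sum>L\<in>{1..k}. \<rho> ^ (k + 1 - L) * lam ^ (k - L)) \<le> real k * (\<rho> * (\<rho> * lam) ^ k)"
      proof -
        have "(\<Sum>L\<in>{1..k}. \<rho> ^ (k + 1 - L) * lam ^ (k - L)) \<le> of_nat (card {1..k}) * (\<rho> * (\<rho> * lam) ^ k)"
        proof (rule sum_bounded_above)
          fix L assume L: "L \<in> {1..k}"
          hence "k + 1 - L = Suc (k - L)" by auto
          hence "\<rho> ^ (k + 1 - L) * lam ^ (k - L) = \<rho> * (\<rho> * lam) ^ (k - L)" by (simp add: power_mult_distrib)
          also have "\<dots> \<le> \<rho> * (\<rho> * lam) ^ k" using rl rho0 by (intro mult_left_mono power_increasing) auto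
          finally show "\<rho> ^ (k + 1 - L) * lam ^ (k - L) \<le> \<rho> * (\<rho> * lam) ^ k" .
        qed
        thus ?thesis by simp
      qed
      have Lb0: "0 \<le> (\<Sum>L\<in>{1..k}. \<rho> ^ (k + 1 - L) * lam ^ (k - L))"
        using rho0 lam1 by (intro sum_nonneg) auto
      have xy: "x (hd w) * y (last w) \<le> xmax * ymax" "x (hd w) * y (last w) \<ge> 0" if "w \<in> Cs" for w
      proof -
        have "hd w < r" "last w < r" using adm_hd[OF Csa[OF that]] adm_last[OF Csa[OF that]] by auto
        thus "x (hd w) * y (last w) \<le> xmax * ymax" using xmax ymax xpos ypos by (intro mult_mono) auto
        show "x (hd w) * y (last w) \<ge> 0" using \<open>hd w < r\<close> \<open>last w < r\<close> xpos ypos by (simp add: less_imp_le)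
      qed
      have "(\<Sum>w\<in>Cs. x (hd w) * y (last w) * (\<Sum>L\<in>{1..k}. \<rho> ^ (k + 1 - L) * lam ^ (k - L)))
          \<le> of_nat (card Cs) * (xmax * ymax * (real k * (\<rho> * (\<rho> * lam) ^ k)))"
      proof (rule sum_bounded_above)
        fix w assume w: "w \<in> Cs"
        show "x (hd w) * y (last w) * (\<Sum>L\<in>{1..k}. \<rho> ^ (k + 1 - L) * lam ^ (k - L))
            \<le> xmax * ymax * (real k * (\<rho> * (\<rho> * lam) ^ k))"
          by (rule mult_mono[OF xy(1)[OF w] Lb]) (use xmax ymax Lb0 in auto)
      qed
      also have "\<dots> \<le> 2 * (xmax * ymax * (real k * (\<rho> * (\<rho> * lam) ^ k)))"
        using cardCs xmax ymax rho0 lam1 by (intro mult_right_mono) auto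
      also have "\<dots> = 2 * (xmax * ymax) * real k * lam ^ k / \<mu> ^ (k + 1)"
        unfolding \<rho>_def R1[OF mu1] by simp
      also have "\<dots> < lam ^ (k - 1) * sxy"
      proof -
        have "m0 ^ k = ((1 + a) ^ k) ^ 2" unfolding a_def by (rule R2[OF m01])
        also have "((1 + a) ^ k) ^ 2 \<ge> (real k * a) ^ 2"
          using pow_ge_lin[of "1 + a" k] a0 by (intro power_mono) auto
        finally have m0k: "(real k * a) ^ 2 \<le> m0 ^ k" .
        have "m0 ^ k \<le> \<mu> ^ (k + 1)"
        proof -
          have "m0 ^ k \<le> m0 ^ (k + 1)" using m01 by (intro power_increasing) auto
          also have "\<dots> \<le> \<mu> ^ (k + 1)" using mum0 m01 by (intro power_mono) auto
          finally show ?thesis .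
        qed
        with m0k have mk: "(real k * a) ^ 2 \<le> \<mu> ^ (k + 1)" by linarith
        have pa: "sxy * a ^ 2 > 0" using sxy0 a0 by simp
        have "2 * xmax * ymax * lam < real k * (sxy * a ^ 2)"
          using kK2 pa by (simp add: divide_less_eq)
        hence "(2 * xmax * ymax * lam) * real k < (real k * (sxy * a ^ 2)) * real k"
          using k1 by (intro mult_strict_right_mono) auto
        hence "2 * (xmax * ymax) * lam * real k < sxy * (real k * a) ^ 2"
          by (simp add: power2_eq_square algebra_simps)
        also have "\<dots> \<le> sxy * \<mu> ^ (k + 1)" using mk sxy0 by (intro mult_left_mono) auto
        finally have key: "2 * (xmax * ymax) * lam * real k < sxy * \<mu> ^ (k + 1)" .
        show ?thesis by (rule R3[OF key lam1 k1 mu1])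
      qed
      finally show ?thesis unfolding sxy_def by simp
    qed
    obtain s where s: "s \<in> S" "z s > 0"
      using pos_witness[OF k1 Csf CsS gt] unfolding S_def z_def by blast
    have Sf: "finite S" unfolding S_def by (rule adm_finite)
    have Sne: "S \<noteq> {}" using s by auto
    have Abnd: "\<forall>u\<in>S. \<forall>v\<in>S. 0 \<le> A u v \<and> A u v \<le> Tk_mat r T k u v"
      using A_bounds[OF k1 Csf CsS] unfolding S_def A_def by blast
    have low: "spec_radius S A \<ge> \<mu>"
    proof (rule sr_cw[of S A \<mu> s z])
      show "finite S" by (rule Sf)
      show "s \<in> S" by (rule s(1))
      show "z s > 0" by (rule s(2))
      show "\<forall>u\<in>S. \<forall>v\<in>S. A u v \<ge> 0" using Abnd by blast
      show "\<mu> > 0" using mu1 by simp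
      show "\<forall>u\<in>S. z u > 0 \<longrightarrow> opR S A z u \<ge> \<mu> * z u"
      proof (intro ballI impI)
        fix u assume u: "u \<in> S" "z u > 0"
        have mi: "opR S A z u \<ge> \<mu> * z u + (lam - \<mu>) * x (hd u) - \<rho> ^ k * (\<Sum>w\<in>Cs. x (hd w))"
          using main_ineq[OF k2 rho0 rhomu Csf CsS, of u] u unfolding S_def A_def z_def by simp
        have "(\<Sum>w\<in>Cs. x (hd w)) \<le> of_nat (card Cs) * xmax"
          by (rule sum_bounded_above) (use xmax adm_hd Csa k1 in auto)
        also have "\<dots> \<le> 2 * xmax" using cardCs xmax by (intro mult_right_mono) auto
        finally have sx: "(\<Sum>w\<in>Cs. x (hd w)) \<le> 2 * xmax" .
        have sx0: "(\<Sum>w\<in>Cs. x (hd w)) \<ge> 0"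
        proof (rule sum_nonneg)
          fix w assume "w \<in> Cs"
          hence "hd w < r" using adm_hd[OF Csa] k1 by simp
          thus "x (hd w) \<ge> 0" using xpos by (simp add: less_imp_le)
        qed
        have "\<rho> ^ k * (\<Sum>w\<in>Cs. x (hd w)) \<le> pw * (2 * xmax)"
          using rhok sx sx0 rho0 pw0 by (intro mult_mono) auto
        also have "pw * (2 * xmax) = \<delta> * xmin" unfolding \<delta>_def Cc_def using xmin by simp
        also have "\<delta> * xmin \<le> \<delta> * x (hd u)" using xmin hdS[OF u(1)] d0 by (intro mult_left_mono) auto
        also have "\<delta> * x (hd u) = (lam - \<mu>) * x (hd u)" unfolding \<mu>_def by simp
        finally show "opR S A z u \<ge> \<mu> * z u" using mi by linarith
      qed
    qed
    have up: "spec_radius S A \<le> lam"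
    proof (rule sr_le[OF Sf Sne])
      fix \<nu> assume "is_eigenvalue S A \<nu>"
      show "cmod \<nu> \<le> lam"
      proof (rule eig_upper[OF Sf _ _ Abnd \<open>is_eigenvalue S A \<nu>\<close>])
        show "\<forall>u\<in>S. x (hd u) > 0" using hdS xpos by auto
        show "\<forall>u\<in>S. opR S (Tk_mat r T k) (\<lambda>v. x (hd v)) u = lam * x (hd u)"
          using X_eig[OF k2] unfolding S_def by blast
      qed
    qed
    have "\<bar>spec_radius S A - lam\<bar> \<le> \<delta>" using low up unfolding \<mu>_def by simp
    thus "\<bar>pf_eigenvalue (adm_words r T k) (Tk_forbid r T k {w1, w2}) - pf_eigenvalue {..<r} T\<bar>
             \<le> Cc * pf_eigenvalue {..<r} T powr (- real k / 2)"
      unfolding S_def A_def Cs_def \<delta>_def pw_def lam_def by simp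
  qed
qed


end
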